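(* Let $q$ be a prime power, $0<k<n$, and $X\in\mathcal{G}_q(n,k)$ with Ferrers diagram $\mathcal{F}_X$ and entries vector $x=(x_1,\dots,x_{|\mathcal{F}_X|})$ of its Ferrers tableaux form $\mathcal{F}(X)$. Then the number $\mathrm{Ind}_{\mathcal{F}}(X)$ of subspaces $Y\in\mathcal{G}_q(n,k)$ with $Y<X$ in the Ferrers-tableaux order is \[\mathrm{Ind}_{\mathcal{F}}(X)=\sum_{i=|\mathcal{F}_X|+1}^{k(n-k)}\alpha_iq^i+\mathrm{ind}_{|\mathcal{F}_X|}(\mathcal{F}_X)\,q^{|\mathcal{F}_X|}+\{x\},\] where $\alpha_i=p(k,n-k,i)$.
   Context: $\mathcal{G}_q(n,k)$ is the set of $k$-dimensional subspaces of $\mathbb{F}_q^n$; field elements are identified with $\mathbb{Z}_q=\{0,\dots,q-1\}$. For $X$, $\mathrm{RE}(X)$ is the unique $k\times n$ reduced row echelon matrix whose rows span $X$. The Ferrers tableaux form $\mathcal{F}(X)$ is obtained from $\mathrm{RE}(X)$ by deleting, in each row, the leading one and all entries to its left, and also deleting all columns containing a leading one; the remaining entries of each row are right-justified. The Ferrers diagram $\mathcal{F}_X$ is $\mathcal{F}(X)$ with entries replaced by dots; $|\mathcal{F}_X|$ is the number of dots. $\mathcal{F}_X$ is represented by $(\mathcal{F}_{n-k},\dots,\mathcal{F}_1)$, $\mathcal{F}_i$ the number of dots in the $i$-th column counted from the right. The entries vector $x=(x_1,\dots,x_{|\mathcal{F}_X|})$ lists the entries of $\mathcal{F}(X)$ numbered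 from right to left within a row and rows from top to bottom; $\{x\}=\sum_t x_tq^{|\mathcal{F}_X|-t}$. For diagrams of equal size, $\mathcal{F}<\widetilde{\mathcal{F}}$ if $\mathcal{F}_i>\widetilde{\mathcal{F}}_i$ at the least $i$ with $\mathcal{F}_i\ne\widetilde{\mathcal{F}}_i$; $\mathrm{ind}_m(\mathcal{F})$ is the number of Ferrers diagrams of size $m$ in a $k\times(n-k)$ box preceding $\mathcal{F}$. Order on $\mathcal{G}_q(n,k)$: $X<Y$ if $|\mathcal{F}_X|>|\mathcal{F}_Y|$; or $|\mathcal{F}_X|=|\mathcal{F}_Y|$ and $\mathcal{F}_X<\mathcal{F}_Y$; or $\mathcal{F}_X=\mathcal{F}_Y$ and $\{x\}<\{y\}$ ($y$ the entries vector of $\mathcal{F}(Y)$). $p(a,\eta,s)$ is the number of partitions of $s$ whose Ferrers diagram fits in an $a\times\eta$ box. *)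

theory Defs
  imports Main
begin

text \<open>Vectors of F_q^n are functions nat => 'a vanishing at indices >= n.
  A k x n matrix is a function nat => nat => 'a vanishing outside rows < k, columns < n.\<close>

definition is_mat :: "nat \<Rightarrow> nat \<Rightarrow> (nat \<Rightarrow> nat \<Rightarrow> 'a::zero) \<Rightarrow> bool" where
  "is_mat k n M \<longleftrightarrow> (\<forall>i j. (k \<le> i \<or> n \<le> j) \<longrightarrow> M i j = 0)"

definition rowspace :: "nat \<Rightarrow> (nat \<Rightarrow> nat \<Rightarrow> 'a::field) \<Rightarrow> (nat \<Rightarrow> 'a) set" where
  "rowspace k M = {v. \<exists>c. v = (\<lambda>j. \<Sum>i<k. c i * M i j)}"

definition rows_indep :: "nat \<Rightarrow> nat \<Rightarrow> (nat \<Rightarrow> nat \<Rightarrow> 'a::field) \<Rightarrow> bool" where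
  "rows_indep k n M \<longleftrightarrow>
     (\<forall>c. (\<forall>j<n. (\<Sum>i<k. c i * M i j) = 0) \<longrightarrow> (\<forall>i<k. c i = 0))"

definition Grass :: "nat \<Rightarrow> nat \<Rightarrow> (nat \<Rightarrow> 'a::field) set set" where
  "Grass n k = {rowspace k M | M. is_mat k n M \<and> rows_indep k n M}"

definition is_RREF :: "nat \<Rightarrow> nat \<Rightarrow> (nat \<Rightarrow> nat \<Rightarrow> 'a::field) \<Rightarrow> bool" where
  "is_RREF n k M \<longleftrightarrow> is_mat k n M \<and>
     (\<exists>piv. (\<forall>i<k. piv i < n \<and> M i (piv i) = 1 \<and> (\<forall>j<piv i. M i j = 0)
                  \<and> (\<forall>i'<k. i' \<noteq> i \<longrightarrow> M i' (piv i) = 0))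
          \<and> (\<forall>i i'. i < i' \<longrightarrow> i' < k \<longrightarrow> piv i < piv i'))"

definition RE :: "nat \<Rightarrow> nat \<Rightarrow> (nat \<Rightarrow> 'a::field) set \<Rightarrow> (nat \<Rightarrow> nat \<Rightarrow> 'a)" where
  "RE n k X = (THE M. is_RREF n k M \<and> rowspace k M = X)"

definition piv :: "nat \<Rightarrow> nat \<Rightarrow> (nat \<Rightarrow> 'a::field) set \<Rightarrow> nat \<Rightarrow> nat" where
  "piv n k X i = (LEAST j. RE n k X i j \<noteq> 0)"

definition nonpiv_cols :: "nat \<Rightarrow> nat \<Rightarrow> (nat \<Rightarrow> 'a::field) set \<Rightarrow> nat list" where
  "nonpiv_cols n k X = filter (\<lambda>j. j \<notin> piv n k X ` {..<k}) [0..<n]"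

text \<open>Ferrers diagram F_X as the function i |-> F_i (number of dots in the i-th column
  counted from the right), for 1 <= i <= n-k, and 0 elsewhere.\<close>
definition ferrers :: "nat \<Rightarrow> nat \<Rightarrow> (nat \<Rightarrow> 'a::field) set \<Rightarrow> nat \<Rightarrow> nat" where
  "ferrers n k X i = (if 1 \<le> i \<and> i \<le> n - k
      then card {r. r < k \<and> piv n k X r < nonpiv_cols n k X ! (n - k - i)} else 0)"

definition fsize :: "nat \<Rightarrow> nat \<Rightarrow> (nat \<Rightarrow> nat) \<Rightarrow> nat" where
  "fsize n k F = (\<Sum>i=1..n-k. F i)"

definition entries :: "nat \<Rightarrow> nat \<Rightarrow> (nat \<Rightarrow> 'a::field) set \<Rightarrow> 'a list" where
  "entries n k X = concat (map (\<lambda>i. map (\<lambda>j. RE n k X i j)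
      (rev (filter (\<lambda>j. piv n k X i < j) (nonpiv_cols n k X)))) [0..<k])"

text \<open>{x} = sum_t x_t q^(|F|-t), with field elements identified with {0..q-1} via enc.\<close>
definition entval :: "('a \<Rightarrow> nat) \<Rightarrow> nat \<Rightarrow> 'a list \<Rightarrow> nat" where
  "entval enc q xs = (\<Sum>t=1..length xs. enc (xs ! (t - 1)) * q ^ (length xs - t))"

definition fless :: "(nat \<Rightarrow> nat) \<Rightarrow> (nat \<Rightarrow> nat) \<Rightarrow> bool" where
  "fless F G \<longleftrightarrow> (\<exists>i. F i \<noteq> G i \<and> (\<forall>j<i. F j = G j) \<and> F i > G i)"

definition box_diagrams :: "nat \<Rightarrow> nat \<Rightarrow> nat \<Rightarrow> (nat \<Rightarrow> nat) set" where
  "box_diagrams n k m = {F. (\<forall>i. (i = 0 \<or> n - k < i) \<longrightarrow> F i = 0)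
      \<and> (\<forall>i j. 1 \<le> i \<longrightarrow> i \<le> j \<longrightarrow> j \<le> n - k \<longrightarrow> F j \<le> F i)
      \<and> (\<forall>i. F i \<le> k) \<and> fsize n k F = m}"

definition ind :: "nat \<Rightarrow> nat \<Rightarrow> nat \<Rightarrow> (nat \<Rightarrow> nat) \<Rightarrow> nat" where
  "ind n k m F = card {G \<in> box_diagrams n k m. fless G F}"

definition gless :: "('a \<Rightarrow> nat) \<Rightarrow> nat \<Rightarrow> nat \<Rightarrow> nat \<Rightarrow> (nat \<Rightarrow> 'a::field) set \<Rightarrow> (nat \<Rightarrow> 'a) set \<Rightarrow> bool" where
  "gless enc q n k X Y \<longleftrightarrow>
     (let FX = ferrers n k X; FY = ferrers n k Y in
       fsize n k FX > fsize n k FY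
     \<or> (fsize n k FX = fsize n k FY \<and> fless FX FY)
     \<or> (FX = FY \<and> entval enc q (entries n k X) < entval enc q (entries n k Y)))"

definition p_box :: "nat \<Rightarrow> nat \<Rightarrow> nat \<Rightarrow> nat" where
  "p_box a eta s = card {f :: nat \<Rightarrow> nat. (\<forall>i. a \<le> i \<longrightarrow> f i = 0)
      \<and> (\<forall>i j. i \<le> j \<longrightarrow> f j \<le> f i) \<and> (\<forall>i. f i \<le> eta) \<and> (\<Sum>i<a. f i) = s}"

end

theory Submission
  imports Defs
begin


lemma rowspace_iff: "v \<in> rowspace k M \<longleftrightarrow> (\<exists>c. v = (\<lambda>j. \<Sum>i<k. c i * M i j))"
  by (simp add: rowspace_def)

lemma row_in_rowspace:
  fixes M :: "nat \<Rightarrow> nat \<Rightarrow> 'a::field"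
  assumes "i < k" shows "(\<lambda>j. M i j) \<in> rowspace k M"
proof -
  have "(\<lambda>j. M i j) = (\<lambda>j. \<Sum>l<k. (if l = i then 1 else 0) * M l j)"
  proof
    fix j
    have "(\<Sum>l<k. (if l = i then 1 else 0) * M l j) = (\<Sum>l<k. if l = i then M l j else 0)"
      by (rule sum.cong) auto
    then show "M i j = (\<Sum>l<k. (if l = i then 1 else 0) * M l j)" using assms by simp
  qed
  then show ?thesis unfolding rowspace_iff by (rule exI[where x="\<lambda>l. if l = i then 1 else 0"])
qed

lemma lincomb_in_rowspace:
  fixes M :: "nat \<Rightarrow> nat \<Rightarrow> 'a::field"
  assumes "finite L" "\<And>l. l \<in> L \<Longrightarrow> w l \<in> rowspace k M"
  shows "(\<lambda>j. \<Sum>l\<in>L. a l * w l j) \<in> rowspace k M"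
proof -
  have "\<forall>l\<in>L. \<exists>d. w l = (\<lambda>j. \<Sum>i<k. d i * M i j)"
    using assms(2) unfolding rowspace_iff by blast
  then obtain d where d: "\<And>l. l \<in> L \<Longrightarrow> w l = (\<lambda>j. \<Sum>i<k. d l i * M i j)"
    by metis
  have "(\<lambda>j. \<Sum>l\<in>L. a l * w l j) = (\<lambda>j. \<Sum>i<k. (\<Sum>l\<in>L. a l * d l i) * M i j)"
  proof
    fix j
    have "(\<Sum>l\<in>L. a l * w l j) = (\<Sum>l\<in>L. \<Sum>i<k. a l * d l i * M i j)"
      by (rule sum.cong) (auto simp: d sum_distrib_left mult.assoc)
    also have "\<dots> = (\<Sum>i<k. \<Sum>l\<in>L. a l * d l i * M i j)" by (rule sum.swap)
    also have "\<dots> = (\<Sum>i<k. (\<Sum>l\<in>L. a l * d l i) * M i j)"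
      by (simp add: sum_distrib_right)
    finally show "(\<Sum>l\<in>L. a l * w l j) = (\<Sum>i<k. (\<Sum>l\<in>L. a l * d l i) * M i j)" .
  qed
  then show ?thesis unfolding rowspace_iff by (rule exI[where x="\<lambda>i. \<Sum>l\<in>L. a l * d l i"])
qed

lemma rowspace_mono:
  fixes A B :: "nat \<Rightarrow> nat \<Rightarrow> 'a::field"
  assumes "\<And>i. i < k \<Longrightarrow> (\<lambda>j. A i j) \<in> rowspace k' B"
  shows "rowspace k A \<subseteq> rowspace k' B"
proof
  fix v assume "v \<in> rowspace k A"
  then obtain c where "v = (\<lambda>j. \<Sum>i<k. c i * A i j)" unfolding rowspace_iff by blast
  moreover have "(\<lambda>j. \<Sum>i<k. c i * A i j) \<in> rowspace k' B"
    using lincomb_in_rowspace[of "{..<k}" "\<lambda>i j. A i j" k' B c] assms by simp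
  ultimately show "v \<in> rowspace k' B" by simp
qed

lemma rowspace_add:
  fixes M :: "nat \<Rightarrow> nat \<Rightarrow> 'a::field"
  assumes "u \<in> rowspace k M" "v \<in> rowspace k M"
  shows "(\<lambda>j. a * u j + b * v j) \<in> rowspace k M"
proof -
  have "(\<lambda>j. \<Sum>l\<in>{0::nat,1}. (if l = 0 then a else b) * (if l = 0 then u else v) j) \<in> rowspace k M"
    by (rule lincomb_in_rowspace) (use assms in auto)
  then show ?thesis by simp
qed

definition rref_p :: "nat \<Rightarrow> nat \<Rightarrow> (nat \<Rightarrow> nat \<Rightarrow> 'a::field) \<Rightarrow> (nat \<Rightarrow> nat) \<Rightarrow> bool" where
  "rref_p n k M p \<longleftrightarrow> (\<forall>i<k. p i < n \<and> M i (p i) = 1 \<and> (\<forall>j<p i. M i j = 0)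
                  \<and> (\<forall>i'<k. i' \<noteq> i \<longrightarrow> M i' (p i) = 0))
          \<and> (\<forall>i i'. i < i' \<longrightarrow> i' < k \<longrightarrow> p i < p i')"

lemma is_RREF_iff: "is_RREF n k M \<longleftrightarrow> is_mat k n M \<and> (\<exists>p. rref_p n k M p)"
  unfolding is_RREF_def rref_p_def by blast

lemma rref_coeff:
  assumes "rref_p n k M p" "l < k"
  shows "(\<Sum>i<k. c i * M i (p l)) = c l"
proof -
  have "(\<Sum>i<k. c i * M i (p l)) = (\<Sum>i<k. if i = l then c i else 0)"
    by (rule sum.cong) (use assms in \<open>auto simp: rref_p_def\<close>)
  then show ?thesis using assms(2) by simp
qed

lemma rref_mono_le:
  assumes "rref_p n k M p" "i \<le> i'" "i' < k" shows "p i \<le> p i'"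
  using assms unfolding rref_p_def by (cases "i = i'") (auto intro: less_imp_le)

lemma rref_lead:
  assumes "rref_p n k M p" "i0 < k" "c i0 \<noteq> 0" "\<And>i. i < i0 \<Longrightarrow> c i = 0"
  shows "(\<forall>j<p i0. (\<Sum>i<k. c i * M i j) = 0) \<and> (\<Sum>i<k. c i * M i (p i0)) \<noteq> 0"
proof (intro conjI allI impI)
  fix j assume j: "j < p i0"
  show "(\<Sum>i<k. c i * M i j) = 0"
  proof (rule sum.neutral, rule ballI)
    fix i assume "i \<in> {..<k}"
    show "c i * M i j = 0"
    proof (cases "i < i0")
      case True then show ?thesis using assms(4) by simp
    next
      case False
      then have "p i0 \<le> p i" using rref_mono_le[OF assms(1)] \<open>i \<in> {..<k}\<close> by simp
      then show ?thesis using j assms(1) \<open>i \<in> {..<k}\<close> unfolding rref_p_def by auto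
    qed
  qed
next
  show "(\<Sum>i<k. c i * M i (p i0)) \<noteq> 0" using rref_coeff[OF assms(1,2)] assms(3) by simp
qed

lemma strict_same_image_aux:
  fixes p1 p2 :: "nat \<Rightarrow> nat"
  assumes m1: "\<forall>i i'. i < i' \<longrightarrow> i' < k \<longrightarrow> p1 i < p1 i'"
    and m2: "\<forall>i i'. i < i' \<longrightarrow> i' < k \<longrightarrow> p2 i < p2 i'"
    and im: "p1 ` {..<k} \<subseteq> p2 ` {..<k}"
    and i: "i < k" and eq: "\<forall>i'<i. p1 i' = p2 i'"
  shows "\<not> p1 i < p2 i"
proof
  assume lt: "p1 i < p2 i"
  obtain j where j: "j < k" "p1 i = p2 j" using im i by auto
  show False
  proof (cases "j < i")
    case True
    then have "p2 j = p1 j" using eq by simp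
    moreover have "p1 j < p1 i" using m1 True i by blast
    ultimately show False using j by simp
  next
    case False
    then have "p2 i \<le> p2 j" using m2 j(1) by (cases "i = j") (auto intro: less_imp_le)
    then show False using lt j by simp
  qed
qed

lemma strict_same_image:
  fixes p1 p2 :: "nat \<Rightarrow> nat"
  assumes m1: "\<forall>i i'. i < i' \<longrightarrow> i' < k \<longrightarrow> p1 i < p1 i'"
    and m2: "\<forall>i i'. i < i' \<longrightarrow> i' < k \<longrightarrow> p2 i < p2 i'"
    and im: "p1 ` {..<k} = p2 ` {..<k}"
  shows "i < k \<Longrightarrow> p1 i = p2 i"
proof (induction i rule: less_induct)
  case (less i)
  then have eq: "\<forall>i'<i. p1 i' = p2 i'" by simp
  have "\<not> p1 i < p2 i" by (rule strict_same_image_aux[OF m1 m2 _ less.prems eq]) (use im in simp)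
  moreover have "\<not> p2 i < p1 i"
    by (rule strict_same_image_aux[OF m2 m1 _ less.prems]) (use im eq in simp_all)
  ultimately show ?case by simp
qed

lemma rref_lead_in_image:
  fixes A B :: "nat \<Rightarrow> nat \<Rightarrow> 'a::field"
  assumes ra: "rref_p n k A pa" and rb: "rref_p n k B pb"
    and sub: "rowspace k A \<subseteq> rowspace k B" and l: "l < k"
  shows "pa l \<in> pb ` {..<k}"
proof -
  have "(\<lambda>j. A l j) \<in> rowspace k B" using row_in_rowspace[OF l, of A] sub by blast
  then obtain c where c: "(\<lambda>j. A l j) = (\<lambda>j. \<Sum>i<k. c i * B i j)" unfolding rowspace_iff by blast
  then have cj: "\<And>j. A l j = (\<Sum>i<k. c i * B i j)" by metis
  have Al: "A l (pa l) = 1" "\<And>j. j < pa l \<Longrightarrow> A l j = 0" using ra l unfolding rref_p_def by auto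
  have "\<exists>i. i < k \<and> c i \<noteq> 0"
  proof (rule ccontr)
    assume "\<not> ?thesis"
    then have "(\<Sum>i<k. c i * B i (pa l)) = 0" by simp
    then show False using Al cj by simp
  qed
  define i0 where "i0 = (LEAST i. i < k \<and> c i \<noteq> 0)"
  have i0: "i0 < k" "c i0 \<noteq> 0" using LeastI_ex[OF \<open>\<exists>i. i < k \<and> c i \<noteq> 0\<close>] unfolding i0_def by auto
  have i0m: "\<And>i. i < i0 \<Longrightarrow> c i = 0"
  proof -
    fix i assume "i < i0"
    then have "\<not> (i < k \<and> c i \<noteq> 0)" unfolding i0_def by (rule not_less_Least)
    then show "c i = 0" using \<open>i < i0\<close> i0(1) by simp
  qed
  have L: "\<forall>j<pb i0. A l j = 0" "A l (pb i0) \<noteq> 0"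
    using rref_lead[where c=c, OF rb i0 i0m] cj by auto
  have "pa l = pb i0"
  proof (rule ccontr)
    assume "pa l \<noteq> pb i0"
    then consider "pa l < pb i0" | "pb i0 < pa l" by linarith
    then show False
    proof cases
      case 1 then show ?thesis using L Al by simp
    next
      case 2 then show ?thesis using L Al by simp
    qed
  qed
  then show ?thesis using i0 by simp
qed

lemma rref_unique:
  fixes M1 M2 :: "nat \<Rightarrow> nat \<Rightarrow> 'a::field"
  assumes m1: "is_mat k n M1" and r1: "rref_p n k M1 p1"
    and m2: "is_mat k n M2" and r2: "rref_p n k M2 p2"
    and eq: "rowspace k M1 = rowspace k M2"
  shows "M1 = M2"
proof -
  have im: "p1 ` {..<k} = p2 ` {..<k}"
    using rref_lead_in_image[OF r1 r2] rref_lead_in_image[OF r2 r1] eq by blast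
  have pe: "\<And>i. i < k \<Longrightarrow> p1 i = p2 i"
    using strict_same_image[OF _ _ im] r1 r2 unfolding rref_p_def by blast
  show ?thesis
  proof (intro ext)
    fix i j
    show "M1 i j = M2 i j"
    proof (cases "i < k")
      case False then show ?thesis using m1 m2 unfolding is_mat_def by simp
    next
      case True
      have "(\<lambda>j. M2 i j) \<in> rowspace k M1" using row_in_rowspace[OF True, of M2] eq by simp
      then obtain c where c: "(\<lambda>j. M2 i j) = (\<lambda>j. \<Sum>l<k. c l * M1 l j)" unfolding rowspace_iff by blast
      then have cj: "\<And>j. M2 i j = (\<Sum>l<k. c l * M1 l j)" by metis
      have cl: "\<And>l. l < k \<Longrightarrow> c l = (if l = i then 1 else 0)"
      proof -
        fix l assume l: "l < k"
        have "c l = M2 i (p1 l)" using cj rref_coeff[OF r1 l] by simp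
        also have "\<dots> = M2 i (p2 l)" using pe l by simp
        also have "\<dots> = (if l = i then 1 else 0)" using r2 l True unfolding rref_p_def by auto
        finally show "c l = (if l = i then 1 else 0)" .
      qed
      have "M2 i j = (\<Sum>l<k. (if l = i then M1 l j else 0))"
        unfolding cj by (rule sum.cong) (auto simp: cl)
      also have "\<dots> = M1 i j" using True by simp
      finally show ?thesis by simp
    qed
  qed
qed

lemma row_nonzero:
  fixes M :: "nat \<Rightarrow> nat \<Rightarrow> 'a::field"
  assumes "rows_indep k n M" "i < k" shows "\<exists>j<n. M i j \<noteq> 0"
proof (rule ccontr)
  assume "\<not> ?thesis"
  then have z: "\<forall>j<n. M i j = 0" by simp
  let ?c = "\<lambda>l. if l = i then (1::'a) else 0"
  have "\<forall>j<n. (\<Sum>l<k. ?c l * M l j) = 0"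
  proof (intro allI impI)
    fix j assume "j < n"
    have "(\<Sum>l<k. ?c l * M l j) = (\<Sum>l<k. if l = i then M l j else 0)" by (rule sum.cong) auto
    then show "(\<Sum>l<k. ?c l * M l j) = 0" using z \<open>j < n\<close> assms(2) by simp
  qed
  then have "\<forall>l<k. ?c l = 0" using assms(1)[unfolded rows_indep_def, THEN spec[of _ ?c]] by blast
  then have "?c i = 0" using assms(2) by blast
  then show False by simp
qed

lemma sum_skip:
  fixes d :: "nat \<Rightarrow> 'b::comm_monoid_add"
  assumes "i0 < Suc k"
  shows "(\<Sum>i<Suc k. d i) = d i0 + (\<Sum>i<k. d (if i < i0 then i else Suc i))"
proof -
  let ?s = "\<lambda>i::nat. if i < i0 then i else Suc i"
  have U: "{..<Suc k} = insert i0 (?s ` {..<k})"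
  proof (rule set_eqI, rule iffI)
    fix x assume x: "x \<in> {..<Suc k}"
    show "x \<in> insert i0 (?s ` {..<k})"
    proof (cases "x = i0")
      case False
      show ?thesis
      proof (cases "x < i0")
        case True then have "x = ?s x" "x < k" using assms by auto
        then show ?thesis by blast
      next
        case F2: False
        then have "x = ?s (x - 1)" "x - 1 < k" using False x by auto
        then show ?thesis by blast
      qed
    qed simp
  next
    fix x assume "x \<in> insert i0 (?s ` {..<k})"
    then show "x \<in> {..<Suc k}" using assms by auto
  qed
  have inj: "inj_on ?s {..<k}" by (auto simp: inj_on_def split: if_splits)
  have "i0 \<notin> ?s ` {..<k}" by auto
  then have "(\<Sum>i<Suc k. d i) = d i0 + sum d (?s ` {..<k})" unfolding U by simp
  also have "sum d (?s ` {..<k}) = (\<Sum>i<k. d (?s i))" by (rule sum.reindex[OF inj, unfolded comp_def])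
  finally show ?thesis .
qed

lemma rref_exists:
  fixes M :: "nat \<Rightarrow> nat \<Rightarrow> 'a::field"
  shows "is_mat k n M \<Longrightarrow> rows_indep k n M \<Longrightarrow>
    \<exists>M'. is_mat k n M' \<and> (\<exists>p. rref_p n k M' p) \<and> rowspace k M' = rowspace k M"
proof (induction k arbitrary: M)
  case 0
  then show ?case by (intro exI[of _ M]) (auto simp: rref_p_def)
next
  case (Suc k M)
  note mat = Suc.prems(1) and ind = Suc.prems(2)
  have ex: "\<exists>j. \<exists>i<Suc k. M i j \<noteq> 0" using row_nonzero[OF ind, of 0] by auto
  define p where "p = (LEAST j. \<exists>i<Suc k. M i j \<noteq> 0)"
  obtain i0 where i0: "i0 < Suc k" "M i0 p \<noteq> 0" using LeastI_ex[OF ex] unfolding p_def by blast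
  have below: "\<And>i j. j < p \<Longrightarrow> M i j = 0"
  proof -
    fix i j assume "j < p"
    then have "\<not> (\<exists>i<Suc k. M i j \<noteq> 0)" unfolding p_def by (rule not_less_Least)
    then show "M i j = 0" using mat unfolding is_mat_def by (cases "i < Suc k") auto
  qed
  have pn: "p < n" using i0 mat unfolding is_mat_def by (meson not_le)
  define a where "a = M i0 p"
  have a: "a \<noteq> 0" using i0 a_def by simp
  define \<sigma> where "\<sigma> i = (if i < i0 then i else Suc i)" for i
  have \<sigma>lt: "\<And>i. i < k \<Longrightarrow> \<sigma> i < Suc k" unfolding \<sigma>_def by auto
  define N where "N i j = (if i < k then M (\<sigma> i) j - (M (\<sigma> i) p / a) * M i0 j else 0)" for i j
  have matN: "is_mat k n N" using mat unfolding is_mat_def N_def by auto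
  have Np: "\<And>i j. j \<le> p \<Longrightarrow> N i j = 0"
  proof -
    fix i j assume "j \<le> p"
    then show "N i j = 0"
    proof (cases "j = p")
      case True then show ?thesis unfolding N_def a_def using a a_def by auto
    next
      case False then show ?thesis using \<open>j \<le> p\<close> below unfolding N_def by auto
    qed
  qed
  have indN: "rows_indep k n N"
    unfolding rows_indep_def
  proof (intro allI impI)
    fix c i assume h: "\<forall>j<n. (\<Sum>i<k. c i * N i j) = 0" and i: "i < k"
    define e where "e = - (\<Sum>i<k. c i * (M (\<sigma> i) p / a))"
    define d where "d l = (if l = i0 then e else if l < i0 then c l else c (l - 1))" for l
    have d\<sigma>: "\<And>i. d (\<sigma> i) = c i" unfolding d_def \<sigma>_def by auto
    have "\<forall>j<n. (\<Sum>l<Suc k. d l * M l j) = 0"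
    proof (intro allI impI)
      fix j assume "j < n"
      have "(\<Sum>l<Suc k. d l * M l j) = d i0 * M i0 j + (\<Sum>i<k. d (\<sigma> i) * M (\<sigma> i) j)"
        using sum_skip[OF i0(1), of "\<lambda>l. d l * M l j"] unfolding \<sigma>_def by simp
      also have "\<dots> = e * M i0 j + (\<Sum>i<k. c i * M (\<sigma> i) j)" using d\<sigma> by (simp add: d_def)
      also have "\<dots> = (\<Sum>i<k. c i * N i j)"
      proof -
        have "(\<Sum>i<k. c i * N i j) = (\<Sum>i<k. c i * M (\<sigma> i) j - (c i * (M (\<sigma> i) p / a)) * M i0 j)"
          by (rule sum.cong) (auto simp: N_def algebra_simps)
        also have "\<dots> = (\<Sum>i<k. c i * M (\<sigma> i) j) - (\<Sum>i<k. c i * (M (\<sigma> i) p / a)) * M i0 j"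
          by (simp add: sum_subtractf sum_distrib_right)
        finally show ?thesis by (simp add: e_def)
      qed
      finally show "(\<Sum>l<Suc k. d l * M l j) = 0" using h \<open>j < n\<close> by simp
    qed
    then have "\<forall>l<Suc k. d l = 0" using ind[unfolded rows_indep_def, THEN spec[of _ d]] by blast
    then show "c i = 0" using d\<sigma>[of i] \<sigma>lt[OF i] by simp
  qed
  obtain N' p' where matN': "is_mat k n N'" and rN': "rref_p n k N' p'"
    and spN': "rowspace k N' = rowspace k N"
    using Suc.IH[OF matN indN] by blast
  have N'p: "\<And>i j. j \<le> p \<Longrightarrow> N' i j = 0"
  proof -
    fix i j assume jp: "j \<le> p"
    show "N' i j = 0"
    proof (cases "i < k")
      case False then show ?thesis using matN' unfolding is_mat_def by simp
    next
      case True
      then have "(\<lambda>j. N' i j) \<in> rowspace k N" using row_in_rowspace[OF True, of N'] spN' by simp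
      then obtain c where "(\<lambda>j. N' i j) = (\<lambda>j. \<Sum>l<k. c l * N l j)" unfolding rowspace_iff by blast
      then have "N' i j = (\<Sum>l<k. c l * N l j)" by metis
      then show ?thesis using Np[OF jp] by simp
    qed
  qed
  have pp': "\<And>i. i < k \<Longrightarrow> p < p' i"
  proof -
    fix i assume "i < k"
    then have "N' i (p' i) = 1" using rN' unfolding rref_p_def by blast
    then show "p < p' i" using N'p by (metis not_le one_neq_zero)
  qed
  define v where "v j = M i0 j / a" for j
  define v' where "v' j = v j - (\<Sum>i<k. v (p' i) * N' i j)" for j
  define M' where "M' i j = (if i = 0 then v' j else N' (i - 1) j)" for i j
  define P where "P i = (if i = 0 then p else p' (i - 1))" for i
  have matM': "is_mat (Suc k) n M'"
    unfolding is_mat_def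
  proof (intro allI impI)
    fix i j assume h: "Suc k \<le> i \<or> n \<le> j"
    show "M' i j = 0"
    proof (cases "i = 0")
      case True
      then have "n \<le> j" using h by simp
      then have "v j = 0" "\<And>i. N' i j = 0" using mat matN' unfolding is_mat_def v_def by auto
      then show ?thesis using True unfolding M'_def v'_def by simp
    next
      case False then show ?thesis using h matN' unfolding is_mat_def M'_def by auto
    qed
  qed
  have v'p: "v' p = 1" unfolding v'_def v_def using N'p a a_def by simp
  have v'low: "\<And>j. j < p \<Longrightarrow> v' j = 0" unfolding v'_def v_def using N'p below by simp
  have v'piv: "\<And>l. l < k \<Longrightarrow> v' (p' l) = 0"
    unfolding v'_def using rref_coeff[OF rN'] by simp
  have rN'a: "\<And>i. i < k \<Longrightarrow> p' i < n" "\<And>i. i < k \<Longrightarrow> N' i (p' i) = 1"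
    "\<And>i j. i < k \<Longrightarrow> j < p' i \<Longrightarrow> N' i j = 0"
    "\<And>i i'. i < k \<Longrightarrow> i' < k \<Longrightarrow> i' \<noteq> i \<Longrightarrow> N' i' (p' i) = 0"
    "\<And>i i'. i < i' \<Longrightarrow> i' < k \<Longrightarrow> p' i < p' i'"
    using rN' unfolding rref_p_def by blast+
  have r1: "\<And>i. i < Suc k \<Longrightarrow> P i < n" using pn rN'a(1) unfolding P_def by auto
  have r2: "\<And>i. i < Suc k \<Longrightarrow> M' i (P i) = 1" using v'p rN'a(2) unfolding P_def M'_def by auto
  have r3: "\<And>i j. i < Suc k \<Longrightarrow> j < P i \<Longrightarrow> M' i j = 0"
    using v'low rN'a(3) unfolding P_def M'_def by auto
  have r4: "\<And>i i'. i < Suc k \<Longrightarrow> i' < Suc k \<Longrightarrow> i' \<noteq> i \<Longrightarrow> M' i' (P i) = 0"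
  proof -
    fix i i' assume i: "i < Suc k" and i': "i' < Suc k" "i' \<noteq> i"
    show "M' i' (P i) = 0"
    proof (cases "i = 0")
      case True
      then show ?thesis using i' N'p unfolding M'_def P_def by auto
    next
      case False
      show ?thesis
      proof (cases "i' = 0")
        case True then show ?thesis using v'piv False i unfolding M'_def P_def by auto
      next
        case F2: False
        have "N' (i' - 1) (p' (i - 1)) = 0"
          using rN'a(4)[of "i - 1" "i' - 1"] False F2 i i' by auto
        then show ?thesis using False F2 unfolding M'_def P_def by simp
      qed
    qed
  qed
  have r5: "\<And>i i'. i < i' \<Longrightarrow> i' < Suc k \<Longrightarrow> P i < P i'"
    using pp' rN'a(5) unfolding P_def by auto
  have rM': "rref_p n (Suc k) M' P"
    unfolding rref_p_def using r1 r2 r3 r4 r5 by blast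
  have rowsN: "\<And>i. i < k \<Longrightarrow> (\<lambda>j. N i j) \<in> rowspace (Suc k) M"
  proof -
    fix i assume i: "i < k"
    have "(\<lambda>j. 1 * M (\<sigma> i) j + (- (M (\<sigma> i) p / a)) * M i0 j) \<in> rowspace (Suc k) M"
      by (rule rowspace_add; rule row_in_rowspace) (use \<sigma>lt[OF i] i0 in auto)
    moreover have "(\<lambda>j. 1 * M (\<sigma> i) j + (- (M (\<sigma> i) p / a)) * M i0 j) = (\<lambda>j. N i j)"
      using i unfolding N_def by auto
    ultimately show "(\<lambda>j. N i j) \<in> rowspace (Suc k) M" by simp
  qed
  have subN'M: "rowspace k N' \<subseteq> rowspace (Suc k) M"
    using rowspace_mono[OF rowsN] spN' by simp
  have subN'M': "rowspace k N' \<subseteq> rowspace (Suc k) M'"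
  proof (rule rowspace_mono)
    fix i assume "i < k"
    then have "(\<lambda>j. M' (Suc i) j) \<in> rowspace (Suc k) M'" by (intro row_in_rowspace) simp
    then show "(\<lambda>j. N' i j) \<in> rowspace (Suc k) M'" unfolding M'_def by simp
  qed
  have rowN'M: "\<And>i. i < k \<Longrightarrow> N' i \<in> rowspace (Suc k) M"
  proof -
    fix i assume "i < k"
    from row_in_rowspace[OF this, of N'] have "(\<lambda>j. N' i j) \<in> rowspace k N'" .
    then show "N' i \<in> rowspace (Suc k) M" using subN'M by auto
  qed
  have rowN'M': "\<And>i. i < k \<Longrightarrow> N' i \<in> rowspace (Suc k) M'"
  proof -
    fix i assume "i < k"
    from row_in_rowspace[OF this, of N'] have "(\<lambda>j. N' i j) \<in> rowspace k N'" .
    then show "N' i \<in> rowspace (Suc k) M'" using subN'M' by auto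
  qed
  define S where "S j = (\<Sum>i<k. v (p' i) * N' i j)" for j
  have SM: "S \<in> rowspace (Suc k) M"
    unfolding S_def
    by (rule lincomb_in_rowspace[where w="\<lambda>i j. N' i j", simplified])
       (use rowN'M in auto)
  have SM': "S \<in> rowspace (Suc k) M'"
    unfolding S_def
    by (rule lincomb_in_rowspace[where w="\<lambda>i j. N' i j", simplified])
       (use rowN'M' in auto)
  have v'M': "v' \<in> rowspace (Suc k) M'"
    using row_in_rowspace[of 0 "Suc k" M'] unfolding M'_def by simp
  have "rowspace (Suc k) M' \<subseteq> rowspace (Suc k) M"
  proof (rule rowspace_mono)
    fix i assume i: "i < Suc k"
    show "(\<lambda>j. M' i j) \<in> rowspace (Suc k) M"
    proof (cases "i = 0")
      case True
      have "(\<lambda>j. (1 / a) * M i0 j + (- 1) * S j) \<in> rowspace (Suc k) M"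
        by (rule rowspace_add[OF row_in_rowspace[OF i0(1)] SM])
      moreover have "(\<lambda>j. (1 / a) * M i0 j + (- 1) * S j) = (\<lambda>j. M' i j)"
        using True unfolding M'_def v'_def v_def S_def by auto
      ultimately show ?thesis by simp
    next
      case False
      then have "(\<lambda>j. N' (i - 1) j) \<in> rowspace k N'" using i by (intro row_in_rowspace) simp
      then show ?thesis using subN'M False unfolding M'_def by auto
    qed
  qed
  moreover have "rowspace (Suc k) M \<subseteq> rowspace (Suc k) M'"
  proof (rule rowspace_mono)
    fix i assume i: "i < Suc k"
    show "(\<lambda>j. M i j) \<in> rowspace (Suc k) M'"
    proof (cases "i = i0")
      case True
      have "(\<lambda>j. a * v' j + a * S j) \<in> rowspace (Suc k) M'"
        by (rule rowspace_add[OF v'M' SM'])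
      moreover have "(\<lambda>j. a * v' j + a * S j) = (\<lambda>j. M i j)"
      proof
        fix j
        have "v' j = v j - S j" unfolding v'_def S_def by simp
        then have "a * v' j + a * S j = a * v j" by (simp add: distrib_left[symmetric])
        also have "\<dots> = M i j" using a True unfolding v_def by simp
        finally show "a * v' j + a * S j = M i j" .
      qed
      ultimately show ?thesis by simp
    next
      case False
      obtain i1 where i1: "i1 < k" "\<sigma> i1 = i"
      proof (cases "i < i0")
        case True then show ?thesis using that[of i] i0 unfolding \<sigma>_def by auto
      next
        case F2: False then show ?thesis using that[of "i - 1"] i False unfolding \<sigma>_def by auto
      qed
      have "(\<lambda>j. N i1 j) \<in> rowspace (Suc k) M'"
        using row_in_rowspace[OF i1(1), of N] spN' subN'M' by auto
      then have "(\<lambda>j. 1 * (1 * N i1 j + M i p * M' 0 j) + M i p * S j) \<in> rowspace (Suc k) M'"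
        by (intro rowspace_add[OF rowspace_add SM'] row_in_rowspace) auto
      moreover have "(\<lambda>j. 1 * (1 * N i1 j + M i p * M' 0 j) + M i p * S j) = (\<lambda>j. M i j)"
      proof
        fix j
        have "M' 0 j = v j - S j" unfolding M'_def v'_def S_def by simp
        then have "1 * (1 * N i1 j + M i p * M' 0 j) + M i p * S j = N i1 j + M i p * v j"
          by (simp add: right_diff_distrib)
        also have "\<dots> = M i j" using i1 a unfolding N_def v_def by simp
        finally show "1 * (1 * N i1 j + M i p * M' 0 j) + M i p * S j = M i j" .
      qed
      ultimately show ?thesis by simp
    qed
  qed
  ultimately show ?case using matM' rM' by blast
qed

lemma rref_indep:
  fixes M :: "nat \<Rightarrow> nat \<Rightarrow> 'a::field"
  assumes "rref_p n k M p" shows "rows_indep k n M"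
  unfolding rows_indep_def
proof (intro allI impI)
  fix c i assume h: "\<forall>j<n. (\<Sum>i<k. c i * M i j) = 0" and i: "i < k"
  have "p i < n" using assms i unfolding rref_p_def by blast
  then show "c i = 0" using h rref_coeff[OF assms i] by auto
qed

lemma rref_p_cong:
  assumes "rref_p n k M p" "\<And>i. i < k \<Longrightarrow> p i = p' i"
  shows "rref_p n k M p'"
  using assms unfolding rref_p_def by simp

definition pivM :: "(nat \<Rightarrow> nat \<Rightarrow> 'a::zero) \<Rightarrow> nat \<Rightarrow> nat" where
  "pivM M i = (LEAST j. M i j \<noteq> 0)"

definition VP :: "nat \<Rightarrow> nat \<Rightarrow> (nat \<Rightarrow> nat) set" where
  "VP n k = {P. (\<forall>i<k. P i < n) \<and> (\<forall>i i'. i < i' \<longrightarrow> i' < k \<longrightarrow> P i < P i')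
              \<and> (\<forall>i. k \<le> i \<longrightarrow> P i = (LEAST j::nat. False))}"

definition RRset :: "nat \<Rightarrow> nat \<Rightarrow> (nat \<Rightarrow> nat \<Rightarrow> 'a::field) set" where
  "RRset n k = {M. is_mat k n M \<and> (\<exists>p. rref_p n k M p)}"

lemma pivM_rref:
  fixes M :: "nat \<Rightarrow> nat \<Rightarrow> 'a::field"
  assumes "is_mat k n M" "rref_p n k M p"
  shows "pivM M i = (if i < k then p i else (LEAST j::nat. False))"
proof (cases "i < k")
  case True
  have "pivM M i = p i" unfolding pivM_def
  proof (rule Least_equality)
    show "M i (p i) \<noteq> 0" using assms(2) True unfolding rref_p_def by simp
    show "\<And>y. M i y \<noteq> 0 \<Longrightarrow> p i \<le> y" using assms(2) True unfolding rref_p_def by (meson not_le)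
  qed
  then show ?thesis using True by simp
next
  case False
  then have "\<And>j. M i j = 0" using assms(1) unfolding is_mat_def by simp
  then show ?thesis using False unfolding pivM_def by simp
qed

lemma RRset_piv:
  fixes M :: "nat \<Rightarrow> nat \<Rightarrow> 'a::field"
  assumes "M \<in> RRset n k"
  shows "pivM M \<in> VP n k" "rref_p n k M (pivM M)"
proof -
  obtain p where m: "is_mat k n M" and r: "rref_p n k M p" using assms unfolding RRset_def by blast
  have e: "\<And>i. pivM M i = (if i < k then p i else (LEAST j::nat. False))" by (rule pivM_rref[OF m r])
  show "rref_p n k M (pivM M)" by (rule rref_p_cong[OF r]) (simp add: e)
  show "pivM M \<in> VP n k" using r unfolding VP_def rref_p_def by (simp add: e)
qed

lemma RE_rowspace:
  fixes M :: "nat \<Rightarrow> nat \<Rightarrow> 'a::field"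
  assumes "M \<in> RRset n k"
  shows "RE n k (rowspace k M) = M"
  unfolding RE_def
proof (rule the_equality)
  show "is_RREF n k M \<and> rowspace k M = rowspace k M" using assms unfolding RRset_def is_RREF_iff by simp
  fix M' assume "is_RREF n k M' \<and> rowspace k M' = rowspace k M"
  then show "M' = M" using assms rref_unique unfolding RRset_def is_RREF_iff by blast
qed

lemma Grass_RR:
  "bij_betw (rowspace k) (RRset n k :: (nat \<Rightarrow> nat \<Rightarrow> 'a::field) set) (Grass n k)"
  unfolding bij_betw_def
proof
  show "inj_on (rowspace k) (RRset n k :: (nat \<Rightarrow> nat \<Rightarrow> 'a::field) set)"
    by (rule inj_onI) (metis RE_rowspace)
  show "rowspace k ` (RRset n k :: (nat \<Rightarrow> nat \<Rightarrow> 'a::field) set) = Grass n k"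
  proof
    show "rowspace k ` (RRset n k :: (nat \<Rightarrow> nat \<Rightarrow> 'a::field) set) \<subseteq> Grass n k"
      unfolding RRset_def Grass_def using rref_indep by blast
    show "Grass n k \<subseteq> rowspace k ` (RRset n k :: (nat \<Rightarrow> nat \<Rightarrow> 'a::field) set)"
    proof
      fix X :: "(nat \<Rightarrow> 'a) set" assume "X \<in> Grass n k"
      then obtain M where "is_mat k n M" "rows_indep k n M" "X = rowspace k M" unfolding Grass_def by blast
      then show "X \<in> rowspace k ` RRset n k" using rref_exists unfolding RRset_def by (metis (mono_tags, lifting) image_eqI mem_Collect_eq)
    qed
  qed
qed

definition NPc :: "nat \<Rightarrow> nat \<Rightarrow> (nat \<Rightarrow> nat) \<Rightarrow> nat list" where
  "NPc n k P = filter (\<lambda>j. j \<notin> P ` {..<k}) [0..<n]"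

definition FPc :: "nat \<Rightarrow> nat \<Rightarrow> (nat \<Rightarrow> nat) \<Rightarrow> nat \<Rightarrow> nat" where
  "FPc n k P i = (if 1 \<le> i \<and> i \<le> n - k
      then card {r. r < k \<and> P r < NPc n k P ! (n - k - i)} else 0)"

definition LPc :: "nat \<Rightarrow> nat \<Rightarrow> (nat \<Rightarrow> nat) \<Rightarrow> (nat \<times> nat) list" where
  "LPc n k P = concat (map (\<lambda>i. map (Pair i) (rev (filter (\<lambda>j. P i < j) (NPc n k P)))) [0..<k])"

lemma ferrers_FPc: "ferrers n k X = FPc n k (piv n k X)"
  unfolding ferrers_def FPc_def NPc_def nonpiv_cols_def by simp

lemma piv_pivM: "piv n k X = pivM (RE n k X)"
  unfolding piv_def pivM_def by simp

lemma entries_LPc: "entries n k X = map (\<lambda>(i,j). RE n k X i j) (LPc n k (piv n k X))"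
  unfolding entries_def LPc_def NPc_def nonpiv_cols_def by (simp add: map_concat comp_def)

lemma distinct_concat_pairs:
  "distinct xs \<Longrightarrow> (\<And>i. distinct (h i)) \<Longrightarrow> distinct (concat (map (\<lambda>i. map (Pair i) (h i)) xs))"
proof (induction xs)
  case Nil then show ?case by simp
next
  case (Cons x xs)
  then show ?case by (auto simp: distinct_map inj_on_def)
qed

lemma LPc_distinct: "distinct (LPc n k P)"
  unfolding LPc_def by (rule distinct_concat_pairs) (auto simp: NPc_def)

lemma LPc_set: "set (LPc n k P) = {(i,j). i < k \<and> j < n \<and> P i < j \<and> j \<notin> P ` {..<k}}"
  unfolding LPc_def NPc_def by auto

lemma VP_inj:
  assumes "P \<in> VP n k" "i < k" "i' < k" "P i = P i'" shows "i = i'"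
proof (rule ccontr)
  assume "i \<noteq> i'"
  then consider "i < i'" | "i' < i" by linarith
  then show False
  proof cases
    case 1 then have "P i < P i'" using assms unfolding VP_def by blast
    then show False using assms by simp
  next
    case 2 then have "P i' < P i" using assms unfolding VP_def by blast
    then show False using assms by simp
  qed
qed

lemma ent_inj:
  fixes M1 M2 :: "nat \<Rightarrow> nat \<Rightarrow> 'a::field"
  assumes M1: "M1 \<in> RRset n k" and M2: "M2 \<in> RRset n k"
    and p1: "pivM M1 = P" and p2: "pivM M2 = P"
    and eq: "map (\<lambda>(i,j). M1 i j) (LPc n k P) = map (\<lambda>(i,j). M2 i j) (LPc n k P)"
  shows "M1 = M2"
proof (intro ext)
  fix i j
  have r1: "rref_p n k M1 P" using RRset_piv(2)[OF M1] p1 by simp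
  have r2: "rref_p n k M2 P" using RRset_piv(2)[OF M2] p2 by simp
  have m1: "is_mat k n M1" and m2: "is_mat k n M2" using M1 M2 unfolding RRset_def by auto
  have P: "P \<in> VP n k" using RRset_piv(1)[OF M1] p1 by simp
  have onL: "\<And>i j. (i,j) \<in> set (LPc n k P) \<Longrightarrow> M1 i j = M2 i j" using eq unfolding map_eq_conv by auto
  show "M1 i j = M2 i j"
  proof (cases "i < k \<and> j < n")
    case False then show ?thesis using m1 m2 unfolding is_mat_def by auto
  next
    case True
    then have i: "i < k" and j: "j < n" by auto
    show ?thesis
    proof (cases "j = P i")
      case True then show ?thesis using r1 r2 i unfolding rref_p_def by simp
    next
      case ne: False
      show ?thesis
      proof (cases "j \<in> P ` {..<k}")
        case True
        then obtain i' where i': "i' < k" "j = P i'" by auto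
        then have "i' \<noteq> i" using ne by auto
        then show ?thesis using r1 r2 i i' unfolding rref_p_def by simp
      next
        case nin: False
        show ?thesis
        proof (cases "j < P i")
          case True then show ?thesis using r1 r2 i unfolding rref_p_def by simp
        next
          case False
          then have "(i,j) \<in> set (LPc n k P)" using ne nin i j unfolding LPc_set by auto
          then show ?thesis by (rule onL)
        qed
      qed
    qed
  qed
qed

lemma ent_surj:
  fixes xs :: "'a::field list"
  assumes P: "P \<in> VP n k" and len: "length xs = length (LPc n k P)"
  shows "\<exists>M \<in> RRset n k. pivM M = P \<and> map (\<lambda>(i,j). M i j) (LPc n k P) = xs"
proof -
  let ?L = "LPc n k P"
  define M where "M i j = (case map_of (zip ?L xs) (i,j) of Some v \<Rightarrow> v | None \<Rightarrow> if i < k \<and> j = P i then 1 else 0)" for i j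
  have Mout: "\<And>i j. (i,j) \<notin> set ?L \<Longrightarrow> M i j = (if i < k \<and> j = P i then 1 else 0)"
  proof -
    fix i j assume "(i,j) \<notin> set ?L"
    then have "map_of (zip ?L xs) (i,j) = None" using len by simp
    then show "M i j = (if i < k \<and> j = P i then 1 else 0)" unfolding M_def by simp
  qed
  have Pn: "\<And>i. i < k \<Longrightarrow> P i < n" using P unfolding VP_def by simp
  have mat: "is_mat k n M" unfolding is_mat_def
  proof (intro allI impI)
    fix i j assume "k \<le> i \<or> n \<le> j"
    then have "(i,j) \<notin> set ?L" unfolding LPc_set by auto
    then show "M i j = 0" using Mout \<open>k \<le> i \<or> n \<le> j\<close> Pn by fastforce
  qed
  have q2: "\<And>i. i < k \<Longrightarrow> M i (P i) = 1" using Mout unfolding LPc_set by simp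
  have q3: "\<And>i j. i < k \<Longrightarrow> j < P i \<Longrightarrow> M i j = 0" using Mout unfolding LPc_set by auto
  have q4: "\<And>i i'. i < k \<Longrightarrow> i' < k \<Longrightarrow> i' \<noteq> i \<Longrightarrow> M i' (P i) = 0"
  proof -
    fix i i' assume i: "i < k" and "i' < k" "i' \<noteq> i"
    then have "P i' \<noteq> P i" using VP_inj[OF P _ i] by metis
    moreover have "(i', P i) \<notin> set ?L" using i unfolding LPc_set by auto
    ultimately show "M i' (P i) = 0" using Mout by simp
  qed
  have q5: "\<And>i i'. i < i' \<Longrightarrow> i' < k \<Longrightarrow> P i < P i'" using P unfolding VP_def by blast
  have r: "rref_p n k M P" unfolding rref_p_def using Pn q2 q3 q4 q5 by blast
  have piv: "pivM M = P"
  proof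
    fix i show "pivM M i = P i" using pivM_rref[OF mat r] P unfolding VP_def by simp
  qed
  have "map (\<lambda>(i,j). M i j) ?L = xs"
  proof (rule nth_equalityI)
    show "length (map (\<lambda>(i,j). M i j) ?L) = length xs" using len by simp
    fix t assume "t < length (map (\<lambda>(i,j). M i j) ?L)"
    then have t: "t < length xs" using len by simp
    obtain i j where ij: "?L ! t = (i,j)" by fastforce
    have "map_of (zip ?L xs) (?L ! t) = Some (xs ! t)"
      by (rule map_of_zip_nth[OF len[symmetric] LPc_distinct t])
    then show "map (\<lambda>(i,j). M i j) ?L ! t = xs ! t" using t len ij unfolding M_def by simp
  qed
  then show ?thesis using mat r piv unfolding RRset_def by blast
qed



lemma dc0:
  fixes S :: "nat set"
  assumes "S \<subseteq> {..<k}" "\<And>x y. x \<in> S \<Longrightarrow> y < x \<Longrightarrow> y \<in> S"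
  shows "S = {..<card S}"
proof (cases "S = {}")
  case True then show ?thesis by simp
next
  case False
  have fin: "finite S" using assms(1) finite_subset by blast
  define m where "m = Max S"
  have "m \<in> S" using Max_in[OF fin False] m_def by simp
  have "S = {..m}"
  proof
    show "S \<subseteq> {..m}" using Max_ge[OF fin] m_def by auto
    show "{..m} \<subseteq> S"
    proof
      fix y assume "y \<in> {..m}"
      then have "y = m \<or> y < m" by auto
      then show "y \<in> S" using assms(2)[OF \<open>m \<in> S\<close>, of y] \<open>m \<in> S\<close> by auto
    qed
  qed
  then show ?thesis by (simp add: lessThan_Suc_atMost[symmetric])
qed

lemma dc1:
  fixes S :: "nat set"
  assumes "S \<subseteq> {1..N}" "\<And>x y. x \<in> S \<Longrightarrow> 1 \<le> y \<Longrightarrow> y < x \<Longrightarrow> y \<in> S"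
  shows "S = {1..card S}"
proof (cases "S = {}")
  case True then show ?thesis by simp
next
  case False
  have fin: "finite S" using assms(1) finite_subset by blast
  define m where "m = Max S"
  have "m \<in> S" using Max_in[OF fin False] m_def by simp
  have "S = {1..m}"
  proof
    show "S \<subseteq> {1..m}" using Max_ge[OF fin] m_def assms(1) by auto
    show "{1..m} \<subseteq> S"
    proof
      fix y assume "y \<in> {1..m}"
      then have "1 \<le> y" "y = m \<or> y < m" by auto
      then show "y \<in> S" using assms(2)[OF \<open>m \<in> S\<close>, of y] \<open>m \<in> S\<close> by auto
    qed
  qed
  then show ?thesis by simp
qed

lemma keyK:
  fixes f :: "nat \<Rightarrow> nat"
  assumes anti: "\<And>a b. a \<le> b \<Longrightarrow> b < k \<Longrightarrow> f b \<le> f a" and r: "r < k"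
  shows "i \<le> f r \<longleftrightarrow> r < card {r'. r' < k \<and> i \<le> f r'}"
proof -
  let ?S = "{r'. r' < k \<and> i \<le> f r'}"
  have "?S = {..<card ?S}"
  proof (rule dc0[of _ k])
    show "?S \<subseteq> {..<k}" by auto
    fix x y assume "x \<in> ?S" "y < x"
    then have "f x \<le> f y" using anti[of y x] by simp
    then show "y \<in> ?S" using \<open>x \<in> ?S\<close> \<open>y < x\<close> by simp
  qed
  then have "r \<in> ?S \<longleftrightarrow> r \<in> {..<card ?S}" by (rule arg_cong[where f="(\<in>) r"])
  then show ?thesis using r by (simp only: lessThan_iff mem_Collect_eq) simp
qed

lemma keyK':
  fixes G :: "nat \<Rightarrow> nat"
  assumes anti: "\<And>a b. 1 \<le> a \<Longrightarrow> a \<le> b \<Longrightarrow> b \<le> N \<Longrightarrow> G b \<le> G a"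
    and i: "1 \<le> i" "i \<le> N"
  shows "r < G i \<longleftrightarrow> i \<le> card {i'. 1 \<le> i' \<and> i' \<le> N \<and> r < G i'}"
proof -
  let ?T = "{i'. 1 \<le> i' \<and> i' \<le> N \<and> r < G i'}"
  have "?T = {1..card ?T}"
  proof (rule dc1[of _ N])
    show "?T \<subseteq> {1..N}" by auto
    fix x y assume "x \<in> ?T" "1 \<le> y" "y < x"
    then have "G x \<le> G y" using anti[of y x] by simp
    then show "y \<in> ?T" using \<open>x \<in> ?T\<close> \<open>y < x\<close> \<open>1 \<le> y\<close> by simp
  qed
  then have "i \<in> ?T \<longleftrightarrow> i \<in> {1..card ?T}" by (rule arg_cong[where f="(\<in>) i"])
  then show ?thesis using i by (simp only: atLeastAtMost_iff mem_Collect_eq) simp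
qed

lemma card_filter_sum: "finite A \<Longrightarrow> card {x \<in> A. P x} = (\<Sum>x\<in>A. if P x then 1 else 0)"
  by (simp add: sum.inter_filter[symmetric])

lemma double_count:
  fixes f :: "nat \<Rightarrow> nat"
  assumes "\<And>r. r < k \<Longrightarrow> f r \<le> N"
  shows "(\<Sum>i=1..N. card {r. r < k \<and> i \<le> f r}) = (\<Sum>r<k. f r)"
proof -
  have "(\<Sum>i=1..N. card {r. r < k \<and> i \<le> f r}) = (\<Sum>i=1..N. \<Sum>r<k. if i \<le> f r then 1 else 0)"
  proof (rule sum.cong)
    fix i
    have "card {r. r < k \<and> i \<le> f r} = card {r \<in> {..<k}. i \<le> f r}"
      by (rule arg_cong[where f=card]) auto
    also have "\<dots> = (\<Sum>r<k. if i \<le> f r then 1 else 0)" by (rule card_filter_sum) simp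
    finally show "card {r. r < k \<and> i \<le> f r} = (\<Sum>r<k. if i \<le> f r then 1 else 0)" .
  qed simp
  also have "\<dots> = (\<Sum>r<k. \<Sum>i=1..N. if i \<le> f r then 1 else 0)" by (rule sum.swap)
  also have "\<dots> = (\<Sum>r<k. f r)"
  proof (rule sum.cong)
    fix r assume "r \<in> {..<k}"
    then have fr: "f r \<le> N" using assms by simp
    have "(\<Sum>i=1..N. if i \<le> f r then 1 else 0) = card {i \<in> {1..N}. i \<le> f r}"
      by (rule card_filter_sum[symmetric]) simp
    also have "{i \<in> {1..N}. i \<le> f r} = {1..f r}" using fr by auto
    finally show "(\<Sum>i=1..N. if i \<le> f r then 1 else 0) = f r" by simp
  qed simp
  finally show ?thesis .
qed

definition lam :: "nat \<Rightarrow> nat \<Rightarrow> (nat \<Rightarrow> nat) \<Rightarrow> nat \<Rightarrow> nat" where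
  "lam n k P r = (if r < k then length (filter (\<lambda>j. P r < j) (NPc n k P)) else 0)"

definition cj :: "nat \<Rightarrow> nat \<Rightarrow> (nat \<Rightarrow> nat) \<Rightarrow> nat \<Rightarrow> nat" where
  "cj n k f i = (if 1 \<le> i \<and> i \<le> n - k then card {r. r < k \<and> i \<le> f r} else 0)"

lemma VP_mono: "P \<in> VP n k \<Longrightarrow> i < i' \<Longrightarrow> i' < k \<Longrightarrow> P i < P i'"
  unfolding VP_def by blast

lemma VP_lt: "P \<in> VP n k \<Longrightarrow> i < k \<Longrightarrow> P i < n"
  unfolding VP_def by blast

lemma VP_gap: "P \<in> VP n k \<Longrightarrow> r + d < k \<Longrightarrow> P r + d \<le> P (r + d)"
proof (induction d)
  case 0 then show ?case by simp
next
  case (Suc d)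
  then have "P r + d \<le> P (r + d)" by simp
  moreover have "P (r + d) < P (r + Suc d)" using VP_mono[OF Suc.prems(1), of "r + d" "r + Suc d"] Suc.prems by simp
  ultimately show ?case by simp
qed

lemma VP_ge: "P \<in> VP n k \<Longrightarrow> r < k \<Longrightarrow> r \<le> P r"
  using VP_gap[of P n k 0 r] by simp

lemma VP_upper: "P \<in> VP n k \<Longrightarrow> r < k \<Longrightarrow> P r + k \<le> n + r"
proof -
  assume P: "P \<in> VP n k" and r: "r < k"
  have "P r + (k - 1 - r) \<le> P (r + (k - 1 - r))" using VP_gap[OF P, of r "k - 1 - r"] r by simp
  moreover have "P (r + (k - 1 - r)) < n" using VP_lt[OF P] r by simp
  ultimately show ?thesis using r by simp
qed

lemma NPc_set: "set (NPc n k P) = {j. j < n \<and> j \<notin> P ` {..<k}}"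
  unfolding NPc_def by auto

lemma NPc_sorted: "sorted_wrt (<) (NPc n k P)"
  unfolding NPc_def by (rule sorted_wrt_filter) (simp add: sorted_wrt_upt)

lemma NPc_distinct: "distinct (NPc n k P)"
  unfolding NPc_def by simp

lemma VP_inj_on: "P \<in> VP n k \<Longrightarrow> inj_on P {..<k}"
  by (rule inj_onI) (use VP_inj in auto)

lemma NPc_length:
  assumes P: "P \<in> VP n k" shows "length (NPc n k P) = n - k"
proof -
  have "length (NPc n k P) = card ({..<n} - P ` {..<k})"
    unfolding NPc_def by (subst distinct_length_filter) (simp_all add: Diff_eq Int_commute lessThan_atLeast0 Collect_neg_eq)
  also have "\<dots> = card {..<n} - card (P ` {..<k})"
    by (rule card_Diff_subset) (use VP_lt[OF P] in auto)
  also have "card (P ` {..<k}) = k" using card_image[OF VP_inj_on[OF P]] by simp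
  finally show ?thesis by simp
qed

lemma lam_formula:
  assumes P: "P \<in> VP n k" and r: "r < k"
  shows "lam n k P r = n - k + r - P r"
proof -
  have "lam n k P r = card ({j. P r < j} \<inter> set (NPc n k P))"
    unfolding lam_def using r by (simp add: distinct_length_filter[OF NPc_distinct])
  also have "{j. P r < j} \<inter> set (NPc n k P) = {P r<..<n} - P ` {r<..<k}"
  proof (rule set_eqI)
    fix j
    show "j \<in> {j. P r < j} \<inter> set (NPc n k P) \<longleftrightarrow> j \<in> {P r<..<n} - P ` {r<..<k}"
    proof
      assume "j \<in> {j. P r < j} \<inter> set (NPc n k P)"
      then show "j \<in> {P r<..<n} - P ` {r<..<k}" unfolding NPc_set by auto
    next
      assume h: "j \<in> {P r<..<n} - P ` {r<..<k}"
      have "j \<notin> P ` {..<k}"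
      proof
        assume "j \<in> P ` {..<k}"
        then obtain i where i: "i < k" "j = P i" by auto
        show False
        proof (cases "r < i")
          case True then show False using h i by auto
        next
          case False
          then have "P i \<le> P r" using VP_mono[OF P, of i r] r by (cases "i = r") auto
          then show False using h i by auto
        qed
      qed
      then show "j \<in> {j. P r < j} \<inter> set (NPc n k P)" using h unfolding NPc_set by auto
    qed
  qed
  also have "card ({P r<..<n} - P ` {r<..<k}) = card {P r<..<n} - card (P ` {r<..<k})"
  proof (rule card_Diff_subset)
    show "P ` {r<..<k} \<subseteq> {P r<..<n}" using VP_mono[OF P, of r] VP_lt[OF P] by auto
  qed simp
  also have "card (P ` {r<..<k}) = k - Suc r"
  proof -
    have "inj_on P {r<..<k}" by (rule inj_on_subset[OF VP_inj_on[OF P]]) auto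
    then show ?thesis by (simp add: card_image)
  qed
  finally show ?thesis using VP_upper[OF P r] VP_ge[OF P r] VP_lt[OF P r] r by simp
qed

lemma lam_le:
  assumes P: "P \<in> VP n k" shows "lam n k P r \<le> n - k"
proof (cases "r < k")
  case True then show ?thesis using lam_formula[OF P True] VP_ge[OF P True] by simp
next
  case False then show ?thesis unfolding lam_def by simp
qed

lemma lam_anti:
  assumes P: "P \<in> VP n k" and ab: "a \<le> b" "b < k"
  shows "lam n k P b \<le> lam n k P a"
proof -
  have "P a + (b - a) \<le> P b" using VP_gap[OF P, of a "b - a"] ab by simp
  then show ?thesis using lam_formula[OF P] ab VP_upper[OF P, of a] VP_upper[OF P, of b] by simp
qed

lemma sorted_nth_filter:
  fixes xs :: "nat list"
  shows "sorted_wrt (<) xs \<Longrightarrow> 1 \<le> i \<Longrightarrow> i \<le> length xs \<Longrightarrow>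
    (a < xs ! (length xs - i)) \<longleftrightarrow> i \<le> length (filter (\<lambda>j. a < j) xs)"
proof (induction xs arbitrary: i)
  case Nil then show ?case by simp
next
  case (Cons x ys)
  have allgt: "\<forall>y\<in>set ys. x < y" using Cons.prems(1) by simp
  show ?case
  proof (cases "i \<le> length ys")
    case True
    have idx: "length (x # ys) - i = Suc (length ys - i)" using True Cons.prems(2) by simp
    have IH: "(a < ys ! (length ys - i)) \<longleftrightarrow> i \<le> length (filter (\<lambda>j. a < j) ys)"
      using Cons.IH[of i] Cons.prems True by simp
    show ?thesis
    proof (cases "a < x")
      case True
      have "filter (\<lambda>j. a < j) ys = ys" unfolding filter_id_conv using allgt True by auto
      moreover have "a < ys ! (length ys - i)"
        using allgt True \<open>i \<le> length ys\<close> Cons.prems(2) by (metis diff_less le_trans less_trans nth_mem zero_less_one not_less_eq_eq Suc_le_eq)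
      ultimately show ?thesis using idx True \<open>i \<le> length ys\<close> by simp
    next
      case False
      then show ?thesis using idx IH by simp
    qed
  next
    case False
    then have i: "i = Suc (length ys)" using Cons.prems(3) by simp
    show ?thesis
    proof (cases "a < x")
      case True
      have "filter (\<lambda>j. a < j) ys = ys" unfolding filter_id_conv using allgt True by auto
      then show ?thesis using i True by simp
    next
      case F: False
      have "length (filter (\<lambda>j. a < j) ys) < Suc (length ys)" by (simp add: le_imp_less_Suc)
      then show ?thesis using i F by auto
    qed
  qed
qed

lemma FPc_lam:
  assumes P: "P \<in> VP n k"
  shows "FPc n k P = cj n k (lam n k P)"
proof
  fix i
  show "FPc n k P i = cj n k (lam n k P) i"
  proof (cases "1 \<le> i \<and> i \<le> n - k")
    case False then show ?thesis unfolding FPc_def cj_def if_not_P[OF False] by simp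
  next
    case True
    have "{r. r < k \<and> P r < NPc n k P ! (n - k - i)} = {r. r < k \<and> i \<le> lam n k P r}"
    proof (rule Collect_cong)
      fix r
      show "(r < k \<and> P r < NPc n k P ! (n - k - i)) \<longleftrightarrow> (r < k \<and> i \<le> lam n k P r)"
        using sorted_nth_filter[OF NPc_sorted[of n k P], of i "P r"] True NPc_length[OF P]
        unfolding lam_def by auto
    qed
    then show ?thesis unfolding FPc_def cj_def using True by simp
  qed
qed

lemma length_LPc: "length (LPc n k P) = (\<Sum>r<k. lam n k P r)"
proof -
  have "length (LPc n k P) = sum_list (map (\<lambda>i. length (filter (\<lambda>j. P i < j) (NPc n k P))) [0..<k])"
    unfolding LPc_def by (simp add: length_concat comp_def)
  also have "\<dots> = (\<Sum>i\<in>{0..<k}. length (filter (\<lambda>j. P i < j) (NPc n k P)))"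
    by (simp add: interv_sum_list_conv_sum_set_nat)
  also have "\<dots> = (\<Sum>r<k. lam n k P r)"
    by (rule sum.cong) (auto simp: lam_def)
  finally show ?thesis .
qed

definition PBs :: "nat \<Rightarrow> nat \<Rightarrow> nat \<Rightarrow> (nat \<Rightarrow> nat) set" where
  "PBs n k s = {f. (\<forall>i. k \<le> i \<longrightarrow> f i = 0) \<and> (\<forall>i j. i \<le> j \<longrightarrow> f j \<le> f i) \<and> (\<forall>i. f i \<le> n - k)
     \<and> (\<Sum>i<k. f i) = s}"

lemma p_box_PBs: "p_box k (n - k) s = card (PBs n k s)"
  unfolding p_box_def PBs_def by simp

definition du :: "nat \<Rightarrow> nat \<Rightarrow> (nat \<Rightarrow> nat) \<Rightarrow> nat \<Rightarrow> nat" where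
  "du n k G r = card {i. 1 \<le> i \<and> i \<le> n - k \<and> r < G i}"

lemma lam_PBs:
  assumes P: "P \<in> VP n k" shows "lam n k P \<in> PBs n k (length (LPc n k P))"
  unfolding PBs_def
proof (intro CollectI conjI allI impI)
  fix i assume "k \<le> i" then show "lam n k P i = 0" unfolding lam_def by simp
next
  fix i j :: nat assume ij: "i \<le> j"
  show "lam n k P j \<le> lam n k P i"
  proof (cases "j < k")
    case True show ?thesis using lam_anti[OF P ij True] by simp
  next
    case False then show ?thesis unfolding lam_def by simp
  qed
next
  fix i show "lam n k P i \<le> n - k" by (rule lam_le[OF P])
next
  show "(\<Sum>i<k. lam n k P i) = length (LPc n k P)" by (simp add: length_LPc)
qed

lemma lam_inj:
  assumes P1: "P1 \<in> VP n k" and P2: "P2 \<in> VP n k" and eq: "lam n k P1 = lam n k P2"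
  shows "P1 = P2"
proof
  fix r
  show "P1 r = P2 r"
  proof (cases "r < k")
    case True
    have "lam n k P1 r = lam n k P2 r" using eq by simp
    then have "n - k + r - P1 r = n - k + r - P2 r" using lam_formula[OF P1 True] lam_formula[OF P2 True] by simp
    then show ?thesis using VP_upper[OF P1 True] VP_upper[OF P2 True] by simp
  next
    case False then show ?thesis using P1 P2 unfolding VP_def by simp
  qed
qed

lemma lam_surj:
  assumes f: "f \<in> PBs n k s" and kn: "k \<le> n"
  shows "\<exists>P\<in>VP n k. lam n k P = f \<and> length (LPc n k P) = s"
proof -
  have f0: "\<And>i. k \<le> i \<Longrightarrow> f i = 0" and fa: "\<And>i j. i \<le> j \<Longrightarrow> f j \<le> f i"
    and fb: "\<And>i. f i \<le> n - k" and fs: "(\<Sum>i<k. f i) = s" using f unfolding PBs_def by auto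
  define P where "P r = (if r < k then n - k + r - f r else (LEAST j::nat. False))" for r
  have PV: "P \<in> VP n k" unfolding VP_def
  proof (intro CollectI conjI allI impI)
    fix i assume "i < k" then show "P i < n" unfolding P_def using kn by simp
  next
    fix i i' :: nat assume "i < i'" "i' < k"
    moreover have "f i' \<le> f i" using fa \<open>i < i'\<close> by simp
    moreover have "f i \<le> n - k" by (rule fb)
    ultimately show "P i < P i'" unfolding P_def by simp
  next
    fix i :: nat assume "k \<le> i" then show "P i = (LEAST j::nat. False)" unfolding P_def by simp
  qed
  have lf: "lam n k P = f"
  proof
    fix r show "lam n k P r = f r"
    proof (cases "r < k")
      case True
      then show ?thesis using lam_formula[OF PV True] fb[of r] unfolding P_def by simp
    next
      case False then show ?thesis using f0 unfolding lam_def by simp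
    qed
  qed
  have "length (LPc n k P) = s" using length_LPc[of n k P] lf fs by simp
  then show ?thesis using PV lf by blast
qed

lemma cj_box:
  assumes f: "f \<in> PBs n k s" shows "cj n k f \<in> box_diagrams n k s"
proof -
  have fb: "\<And>i. f i \<le> n - k" and fs: "(\<Sum>i<k. f i) = s" using f unfolding PBs_def by auto
  have a: "\<forall>i. (i = 0 \<or> n - k < i) \<longrightarrow> cj n k f i = 0" unfolding cj_def by auto
  have b: "\<forall>i j. 1 \<le> i \<longrightarrow> i \<le> j \<longrightarrow> j \<le> n - k \<longrightarrow> cj n k f j \<le> cj n k f i"
  proof (intro allI impI)
    fix i j :: nat assume "1 \<le> i" "i \<le> j" "j \<le> n - k"
    then have "{r. r < k \<and> j \<le> f r} \<subseteq> {r. r < k \<and> i \<le> f r}" by auto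
    then have "card {r. r < k \<and> j \<le> f r} \<le> card {r. r < k \<and> i \<le> f r}" by (rule card_mono[rotated]) simp
    then show "cj n k f j \<le> cj n k f i" unfolding cj_def using \<open>1 \<le> i\<close> \<open>i \<le> j\<close> \<open>j \<le> n - k\<close> by simp
  qed
  have c: "\<forall>i. cj n k f i \<le> k"
  proof
    fix i
    have "card {r. r < k \<and> i \<le> f r} \<le> card {..<k}" by (rule card_mono) auto
    then show "cj n k f i \<le> k" unfolding cj_def by simp
  qed
  have "fsize n k (cj n k f) = (\<Sum>i=1..n-k. card {r. r < k \<and> i \<le> f r})"
    unfolding fsize_def cj_def by (rule sum.cong) auto
  also have "\<dots> = s" using double_count[of k f "n - k"] fb fs by simp
  finally show ?thesis using a b c unfolding box_diagrams_def by blast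
qed

lemma du_cj:
  assumes f: "f \<in> PBs n k s" shows "du n k (cj n k f) = f"
proof
  fix r
  have f0: "\<And>i. k \<le> i \<Longrightarrow> f i = 0" and fa: "\<And>i j. i \<le> j \<Longrightarrow> f j \<le> f i"
    and fb: "\<And>i. f i \<le> n - k" using f unfolding PBs_def by auto
  show "du n k (cj n k f) r = f r"
  proof (cases "r < k")
    case True
    have "{i. 1 \<le> i \<and> i \<le> n - k \<and> r < cj n k f i} = {1..f r}"
    proof (rule set_eqI)
      fix i
      have anti: "\<And>a b. a \<le> b \<Longrightarrow> b < k \<Longrightarrow> f b \<le> f a" using fa by blast
      have "1 \<le> i \<and> i \<le> n - k \<Longrightarrow> r < cj n k f i \<longleftrightarrow> i \<le> f r"
        unfolding cj_def using keyK[where k=k and f=f and r=r and i=i, OF anti True] by simp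
      then show "i \<in> {i. 1 \<le> i \<and> i \<le> n - k \<and> r < cj n k f i} \<longleftrightarrow> i \<in> {1..f r}"
        using fb[of r] by auto
    qed
    then show ?thesis unfolding du_def by simp
  next
    case False
    have "\<And>i. cj n k f i \<le> k"
    proof -
      fix i
      have "card {r. r < k \<and> i \<le> f r} \<le> card {..<k}" by (rule card_mono) auto
      then show "cj n k f i \<le> k" unfolding cj_def by simp
    qed
    then have "\<And>i. \<not> r < cj n k f i" using False by (meson le_trans not_le)
    then have "{i. 1 \<le> i \<and> i \<le> n - k \<and> r < cj n k f i} = {}" by simp
    then show ?thesis unfolding du_def using f0 False by simp
  qed
qed

lemma du_box:
  assumes G: "G \<in> box_diagrams n k s"
  shows "du n k G \<in> PBs n k s" "cj n k (du n k G) = G"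
proof -
  have G0: "\<And>i. i = 0 \<or> n - k < i \<Longrightarrow> G i = 0"
    and Ga: "\<And>i j. 1 \<le> i \<Longrightarrow> i \<le> j \<Longrightarrow> j \<le> n - k \<Longrightarrow> G j \<le> G i"
    and Gk: "\<And>i. G i \<le> k" and Gs: "fsize n k G = s" using G unfolding box_diagrams_def by auto
  show cjdu: "cj n k (du n k G) = G"
  proof
    fix i
    show "cj n k (du n k G) i = G i"
    proof (cases "1 \<le> i \<and> i \<le> n - k")
      case True
      have "{r. r < k \<and> i \<le> du n k G r} = {..<G i}"
      proof (rule set_eqI)
        fix r
        have "r < G i \<longleftrightarrow> i \<le> du n k G r" unfolding du_def
          using keyK'[where N="n - k" and G=G and i=i and r=r, OF Ga] True by simp
        moreover have "r < G i \<Longrightarrow> r < k" using Gk[of i] by linarith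
        ultimately show "r \<in> {r. r < k \<and> i \<le> du n k G r} \<longleftrightarrow> r \<in> {..<G i}" by blast
      qed
      then show ?thesis unfolding cj_def using True by simp
    next
      case False
      then have "i = 0 \<or> n - k < i" by linarith
      then have "G i = 0" by (rule G0)
      then show ?thesis unfolding cj_def if_not_P[OF False] by simp
    qed
  qed
  have d0: "\<And>i. k \<le> i \<Longrightarrow> du n k G i = 0"
  proof -
    fix i assume "k \<le> i"
    then have "\<And>i'. \<not> i < G i'" using Gk by (meson le_trans not_le)
    then have "{i'. 1 \<le> i' \<and> i' \<le> n - k \<and> i < G i'} = {}" by simp
    then show "du n k G i = 0" unfolding du_def by simp
  qed
  have da: "\<And>i j. i \<le> j \<Longrightarrow> du n k G j \<le> du n k G i"
  proof -
    fix i j :: nat assume "i \<le> j"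
    then have "{i'. 1 \<le> i' \<and> i' \<le> n - k \<and> j < G i'} \<subseteq> {i'. 1 \<le> i' \<and> i' \<le> n - k \<and> i < G i'}" by auto
    then show "du n k G j \<le> du n k G i" unfolding du_def by (rule card_mono[rotated]) simp
  qed
  have db: "\<And>i. du n k G i \<le> n - k"
  proof -
    fix i
    have "card {i'. 1 \<le> i' \<and> i' \<le> n - k \<and> i < G i'} \<le> card {1..n-k}" by (rule card_mono) auto
    then show "du n k G i \<le> n - k" unfolding du_def by simp
  qed
  have "(\<Sum>r<k. du n k G r) = (\<Sum>i=1..n-k. card {r. r < k \<and> i \<le> du n k G r})"
    using double_count[of k "du n k G" "n - k"] db by simp
  also have "\<dots> = fsize n k (cj n k (du n k G))"
    unfolding fsize_def cj_def by (rule sum.cong) auto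
  also have "\<dots> = s" using cjdu Gs by simp
  finally show "du n k G \<in> PBs n k s" unfolding PBs_def using d0 da db by blast
qed

lemma fsize_FPc:
  assumes P: "P \<in> VP n k" shows "fsize n k (FPc n k P) = length (LPc n k P)"
  using cj_box[OF lam_PBs[OF P]] FPc_lam[OF P] unfolding box_diagrams_def by simp

lemma FPc_inj:
  assumes P1: "P1 \<in> VP n k" and P2: "P2 \<in> VP n k" and eq: "FPc n k P1 = FPc n k P2"
  shows "P1 = P2"
proof -
  have "lam n k P1 = du n k (cj n k (lam n k P1))" using du_cj[OF lam_PBs[OF P1]] by simp
  also have "\<dots> = du n k (cj n k (lam n k P2))" using eq FPc_lam[OF P1] FPc_lam[OF P2] by simp
  also have "\<dots> = lam n k P2" using du_cj[OF lam_PBs[OF P2]] by simp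
  finally show ?thesis using lam_inj[OF P1 P2] by simp
qed

lemma FPc_bij:
  assumes kn: "k \<le> n"
  shows "bij_betw (FPc n k) {P \<in> VP n k. length (LPc n k P) = s} (box_diagrams n k s)"
  unfolding bij_betw_def
proof
  show "inj_on (FPc n k) {P \<in> VP n k. length (LPc n k P) = s}"
  proof (rule inj_onI)
    fix x y assume "x \<in> {P \<in> VP n k. length (LPc n k P) = s}" "y \<in> {P \<in> VP n k. length (LPc n k P) = s}"
      "FPc n k x = FPc n k y"
    then show "x = y" using FPc_inj[of x n k y] by simp
  qed
  show "FPc n k ` {P \<in> VP n k. length (LPc n k P) = s} = box_diagrams n k s"
  proof
    show "FPc n k ` {P \<in> VP n k. length (LPc n k P) = s} \<subseteq> box_diagrams n k s"
    proof
      fix G assume "G \<in> FPc n k ` {P \<in> VP n k. length (LPc n k P) = s}"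
      then obtain P where P: "P \<in> VP n k" "length (LPc n k P) = s" "G = FPc n k P" by blast
      then show "G \<in> box_diagrams n k s" using cj_box[OF lam_PBs[OF P(1)]] FPc_lam[OF P(1)] by simp
    qed
    show "box_diagrams n k s \<subseteq> FPc n k ` {P \<in> VP n k. length (LPc n k P) = s}"
    proof
      fix G assume G: "G \<in> box_diagrams n k s"
      obtain P where P: "P \<in> VP n k" "lam n k P = du n k G" "length (LPc n k P) = s"
        using lam_surj[OF du_box(1)[OF G] kn] by blast
      have "FPc n k P = G" using FPc_lam[OF P(1)] P(2) du_box(2)[OF G] by simp
      then show "G \<in> FPc n k ` {P \<in> VP n k. length (LPc n k P) = s}" using P by blast
    qed
  qed
qed

lemma lam_bij:
  assumes kn: "k \<le> n"
  shows "bij_betw (lam n k) {P \<in> VP n k. length (LPc n k P) = s} (PBs n k s)"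
  unfolding bij_betw_def
proof
  show "inj_on (lam n k) {P \<in> VP n k. length (LPc n k P) = s}"
  proof (rule inj_onI)
    fix x y assume "x \<in> {P \<in> VP n k. length (LPc n k P) = s}" "y \<in> {P \<in> VP n k. length (LPc n k P) = s}"
      "lam n k x = lam n k y"
    then show "x = y" using lam_inj[of x n k y] by simp
  qed
  show "lam n k ` {P \<in> VP n k. length (LPc n k P) = s} = PBs n k s"
  proof
    show "lam n k ` {P \<in> VP n k. length (LPc n k P) = s} \<subseteq> PBs n k s"
    proof
      fix f assume "f \<in> lam n k ` {P \<in> VP n k. length (LPc n k P) = s}"
      then obtain P where "P \<in> VP n k" "length (LPc n k P) = s" "f = lam n k P" by blast
      then show "f \<in> PBs n k s" using lam_PBs by metis
    qed
    show "PBs n k s \<subseteq> lam n k ` {P \<in> VP n k. length (LPc n k P) = s}"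
    proof
      fix f assume "f \<in> PBs n k s"
      then obtain P where "P \<in> VP n k" "lam n k P = f" "length (LPc n k P) = s"
        using lam_surj[OF _ kn] by blast
      then show "f \<in> lam n k ` {P \<in> VP n k. length (LPc n k P) = s}" by blast
    qed
  qed
qed

lemma LPc_bound:
  assumes P: "P \<in> VP n k" shows "length (LPc n k P) \<le> k * (n - k)"
proof -
  have "(\<Sum>r<k. lam n k P r) \<le> (\<Sum>r<k. n - k)" by (rule sum_mono) (rule lam_le[OF P])
  then show ?thesis by (simp add: length_LPc)
qed



lemma entval_Cons: "entval enc q (x # xs) = enc x * q ^ length xs + entval enc q xs"
proof -
  have "entval enc q (x # xs) = (\<Sum>t=1..Suc (length xs). enc ((x # xs) ! (t - 1)) * q ^ (Suc (length xs) - t))"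
    unfolding entval_def by simp
  also have "\<dots> = enc x * q ^ length xs + (\<Sum>t=Suc 1..Suc (length xs). enc ((x # xs) ! (t - 1)) * q ^ (Suc (length xs) - t))"
    by (subst sum.atLeast_Suc_atMost) simp_all
  also have "(\<Sum>t=Suc 1..Suc (length xs). enc ((x # xs) ! (t - 1)) * q ^ (Suc (length xs) - t))
      = (\<Sum>t=1..length xs. enc ((x # xs) ! t) * q ^ (length xs - t))"
    by (subst sum.shift_bounds_cl_Suc_ivl) simp
  also have "\<dots> = entval enc q xs"
    unfolding entval_def by (rule sum.cong) (auto simp: nth_Cons')
  finally show ?thesis .
qed

lemma entval_Nil: "entval enc q [] = 0"
  unfolding entval_def by simp

lemma entval_lt:
  assumes "\<And>x. enc x < q" shows "entval enc q xs < q ^ length xs"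
proof (induction xs)
  case Nil then show ?case by (simp add: entval_Nil)
next
  case (Cons x xs)
  have "entval enc q (x # xs) = enc x * q ^ length xs + entval enc q xs" by (rule entval_Cons)
  also have "\<dots> < enc x * q ^ length xs + q ^ length xs" using Cons.IH by simp
  also have "\<dots> = (enc x + 1) * q ^ length xs" by simp
  also have "\<dots> \<le> q * q ^ length xs" using assms[of x] by (intro mult_right_mono) auto
  finally show ?case by simp
qed

lemma entval_inj:
  assumes inj: "inj enc" and lt: "\<And>x. enc x < q"
  shows "length xs = length ys \<Longrightarrow> entval enc q xs = entval enc q ys \<Longrightarrow> xs = ys"
proof (induction xs ys rule: list_induct2)
  case Nil then show ?case by simp
next
  case (Cons x xs y ys)
  let ?Q = "q ^ length xs"
  have e1: "entval enc q xs < ?Q" using entval_lt[where enc=enc, OF lt] by simp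
  have e2: "entval enc q ys < ?Q" using entval_lt[where enc=enc, OF lt] Cons.hyps by simp
  have eq: "entval enc q xs + enc x * ?Q = entval enc q ys + enc y * ?Q"
    using Cons.prems Cons.hyps by (simp add: entval_Cons add.commute)
  have Q0: "?Q \<noteq> 0" using e1 by (metis less_zeroE)
  have "(entval enc q xs + enc x * ?Q) div ?Q = enc x" using e1 Q0 by simp
  moreover have "(entval enc q ys + enc y * ?Q) div ?Q = enc y" using e2 Q0 by simp
  ultimately have "enc x = enc y" using eq by simp
  then have "x = y" using inj by (simp add: inj_eq)
  moreover have "entval enc q xs = entval enc q ys" using eq \<open>enc x = enc y\<close> by simp
  ultimately show ?case using Cons.IH by simp
qed

lemma entval_count:
  fixes enc :: "'a::finite \<Rightarrow> nat"
  assumes bij: "bij_betw enc UNIV {..<card (UNIV :: 'a set)}" and e: "e \<le> card (UNIV :: 'a set) ^ L"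
  shows "card {xs :: 'a list. length xs = L \<and> entval enc (card (UNIV :: 'a set)) xs < e} = e"
proof -
  let ?q = "card (UNIV :: 'a set)"
  let ?A = "{xs :: 'a list. length xs = L}"
  have inj: "inj enc" using bij unfolding bij_betw_def by simp
  have lt: "\<And>x. enc x < ?q" using bij unfolding bij_betw_def by auto
  have cA: "card ?A = ?q ^ L" using card_lists_length_eq[of "UNIV :: 'a set" L] by simp
  have fA: "finite ?A" using finite_lists_length_eq[of "UNIV :: 'a set" L] by simp
  have injA: "inj_on (entval enc ?q) ?A" by (rule inj_onI) (use entval_inj[where enc=enc, OF inj lt] in simp)
  have sub: "entval enc ?q ` ?A \<subseteq> {..<?q ^ L}" using entval_lt[where enc=enc, OF lt] by auto
  have imA: "entval enc ?q ` ?A = {..<?q ^ L}"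
    by (rule card_subset_eq[OF _ sub]) (simp_all add: card_image[OF injA] cA)
  have "card {xs \<in> ?A. entval enc ?q xs < e} = card (entval enc ?q ` {xs \<in> ?A. entval enc ?q xs < e})"
    by (rule card_image[symmetric]) (rule inj_on_subset[OF injA]; auto)
  also have "entval enc ?q ` {xs \<in> ?A. entval enc ?q xs < e} = {..<e}"
  proof
    show "entval enc ?q ` {xs \<in> ?A. entval enc ?q xs < e} \<subseteq> {..<e}" by auto
    show "{..<e} \<subseteq> entval enc ?q ` {xs \<in> ?A. entval enc ?q xs < e}"
    proof
      fix v assume v: "v \<in> {..<e}"
      then have "v \<in> entval enc ?q ` ?A" using imA e by auto
      then obtain xs where "xs \<in> ?A" "v = entval enc ?q xs" by blast
      then show "v \<in> entval enc ?q ` {xs \<in> ?A. entval enc ?q xs < e}" using v by auto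
    qed
  qed
  finally show ?thesis by simp
qed

lemma finite_VP: "finite (VP n k)"
proof (rule finite_subset)
  show "VP n k \<subseteq> {f. \<forall>x. (x \<in> {..<k} \<longrightarrow> f x \<in> {..<n}) \<and> (x \<notin> {..<k} \<longrightarrow> f x = (LEAST j::nat. False))}"
    unfolding VP_def by auto
  show "finite {f. \<forall>x. (x \<in> {..<k} \<longrightarrow> f x \<in> {..<n}) \<and> (x \<notin> {..<k} \<longrightarrow> f x = (LEAST j::nat. False))}"
    by (rule finite_set_of_finite_funs) simp_all
qed

lemma count_fiber:
  fixes Q :: "(nat \<Rightarrow> nat) \<Rightarrow> 'a::{field,finite} list \<Rightarrow> bool"
  assumes P: "P \<in> VP n k"
  shows "finite {M :: nat \<Rightarrow> nat \<Rightarrow> 'a. M \<in> RRset n k \<and> pivM M = P \<and> Q P (map (\<lambda>(i,j). M i j) (LPc n k P))}"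
    "card {M :: nat \<Rightarrow> nat \<Rightarrow> 'a. M \<in> RRset n k \<and> pivM M = P \<and> Q P (map (\<lambda>(i,j). M i j) (LPc n k P))}
      = card {xs :: 'a list. length xs = length (LPc n k P) \<and> Q P xs}"
proof -
  let ?S = "{M :: nat \<Rightarrow> nat \<Rightarrow> 'a. M \<in> RRset n k \<and> pivM M = P \<and> Q P (map (\<lambda>(i,j). M i j) (LPc n k P))}"
  let ?f = "\<lambda>M :: nat \<Rightarrow> nat \<Rightarrow> 'a. map (\<lambda>(i,j). M i j) (LPc n k P)"
  have inj: "inj_on ?f ?S"
  proof (rule inj_onI)
    fix M1 M2 assume "M1 \<in> ?S" "M2 \<in> ?S" "?f M1 = ?f M2"
    then show "M1 = M2" using ent_inj[of M1 n k M2 P] by simp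
  qed
  have im: "?f ` ?S = {xs. length xs = length (LPc n k P) \<and> Q P xs}"
  proof
    show "?f ` ?S \<subseteq> {xs. length xs = length (LPc n k P) \<and> Q P xs}" by auto
    show "{xs. length xs = length (LPc n k P) \<and> Q P xs} \<subseteq> ?f ` ?S"
    proof
      fix xs :: "'a list" assume xs: "xs \<in> {xs. length xs = length (LPc n k P) \<and> Q P xs}"
      then obtain M where M: "M \<in> RRset n k" "pivM M = P" "?f M = xs"
        using ent_surj[OF P, of xs] by auto
      then show "xs \<in> ?f ` ?S" using xs by force
    qed
  qed
  have "finite {xs :: 'a list. length xs = length (LPc n k P) \<and> Q P xs}"
    by (rule finite_subset[OF _ finite_lists_length_eq[of "UNIV :: 'a set" "length (LPc n k P)"]]) auto
  then show "finite ?S" using finite_imageD[OF _ inj] im by simp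
  show "card ?S = card {xs. length xs = length (LPc n k P) \<and> Q P xs}"
    using card_image[OF inj] im by simp
qed

lemma count_by_piv:
  fixes Q :: "(nat \<Rightarrow> nat) \<Rightarrow> 'a::{field,finite} list \<Rightarrow> bool"
  shows "card {M :: nat \<Rightarrow> nat \<Rightarrow> 'a. M \<in> RRset n k \<and> Q (pivM M) (map (\<lambda>(i,j). M i j) (LPc n k (pivM M)))}
    = (\<Sum>P\<in>VP n k. card {xs :: 'a list. length xs = length (LPc n k P) \<and> Q P xs})"
proof -
  define S where "S P = {M :: nat \<Rightarrow> nat \<Rightarrow> 'a. M \<in> RRset n k \<and> pivM M = P \<and> Q P (map (\<lambda>(i,j). M i j) (LPc n k P))}" for P
  have U: "{M :: nat \<Rightarrow> nat \<Rightarrow> 'a. M \<in> RRset n k \<and> Q (pivM M) (map (\<lambda>(i,j). M i j) (LPc n k (pivM M)))}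
      = (\<Union>P\<in>VP n k. S P)"
  proof
    show "{M :: nat \<Rightarrow> nat \<Rightarrow> 'a. M \<in> RRset n k \<and> Q (pivM M) (map (\<lambda>(i,j). M i j) (LPc n k (pivM M)))} \<subseteq> (\<Union>P\<in>VP n k. S P)"
    proof
      fix M :: "nat \<Rightarrow> nat \<Rightarrow> 'a"
      assume "M \<in> {M. M \<in> RRset n k \<and> Q (pivM M) (map (\<lambda>(i,j). M i j) (LPc n k (pivM M)))}"
      then have "M \<in> RRset n k" "Q (pivM M) (map (\<lambda>(i,j). M i j) (LPc n k (pivM M)))" by auto
      moreover have "pivM M \<in> VP n k" using RRset_piv(1)[OF \<open>M \<in> RRset n k\<close>] .
      ultimately show "M \<in> (\<Union>P\<in>VP n k. S P)" unfolding S_def by blast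
    qed
    show "(\<Union>P\<in>VP n k. S P) \<subseteq> {M :: nat \<Rightarrow> nat \<Rightarrow> 'a. M \<in> RRset n k \<and> Q (pivM M) (map (\<lambda>(i,j). M i j) (LPc n k (pivM M)))}"
      unfolding S_def by auto
  qed
  have "card (\<Union>P\<in>VP n k. S P) = (\<Sum>P\<in>VP n k. card (S P))"
  proof (rule card_UN_disjoint)
    show "finite (VP n k)" by (rule finite_VP)
    show "\<forall>P\<in>VP n k. finite (S P)" unfolding S_def using count_fiber(1) by blast
    show "\<forall>P\<in>VP n k. \<forall>P'\<in>VP n k. P \<noteq> P' \<longrightarrow> S P \<inter> S P' = {}" unfolding S_def by auto
  qed
  also have "\<dots> = (\<Sum>P\<in>VP n k. card {xs :: 'a list. length xs = length (LPc n k P) \<and> Q P xs})"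
    by (rule sum.cong) (simp_all add: S_def count_fiber(2))
  finally show ?thesis using U by simp
qed

lemma fless_irrefl: "\<not> fless F F"
  unfolding fless_def by simp

lemma sum_if_const:
  "finite A \<Longrightarrow> (\<Sum>x\<in>A. if R x then c else 0) = card {x \<in> A. R x} * (c::nat)"
  by (simp add: sum.inter_filter[symmetric])

theorem theorem8:
  fixes enc :: "'a::{field,finite} \<Rightarrow> nat" and n k :: nat and X :: "(nat \<Rightarrow> 'a) set"
  assumes "bij_betw enc UNIV {..<card (UNIV :: 'a set)}"
    and "0 < k" and "k < n"
    and "X \<in> Grass n k"
  shows "card {Y \<in> Grass n k. gless enc (card (UNIV :: 'a set)) n k Y X} =
     (let q = card (UNIV :: 'a set); F = ferrers n k X; m = fsize n k F in
       (\<Sum>i\<in>{m+1..k*(n-k)}. p_box k (n-k) i * q ^ i)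
       + ind n k m F * q ^ m + entval enc q (entries n k X))"
proof -
  note bij = assms(1)
  have kn: "k \<le> n" using assms(3) by simp
  define q where "q = card (UNIV :: 'a set)"
  have lt: "\<And>x. enc x < q" using bij unfolding bij_betw_def q_def by auto
  obtain MX :: "nat \<Rightarrow> nat \<Rightarrow> 'a" where MX: "MX \<in> RRset n k" "X = rowspace k MX"
    using assms(4) Grass_RR[of k n] unfolding bij_betw_def by auto
  have REX: "RE n k X = MX" using RE_rowspace[OF MX(1)] MX(2) by simp
  define PX where "PX = pivM MX"
  have PX: "PX \<in> VP n k" unfolding PX_def by (rule RRset_piv(1)[OF MX(1)])
  have pivX: "piv n k X = PX" unfolding PX_def piv_pivM REX ..
  define FX where "FX = ferrers n k X"
  have FX: "FX = FPc n k PX" unfolding FX_def ferrers_FPc pivX ..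
  define m where "m = fsize n k FX"
  have m: "m = length (LPc n k PX)" unfolding m_def FX by (rule fsize_FPc[OF PX])
  define e where "e = entval enc q (entries n k X)"
  have entX: "entries n k X = map (\<lambda>(i,j). MX i j) (LPc n k PX)" unfolding entries_LPc pivX REX ..
  have e_lt: "e < q ^ m" unfolding e_def using entval_lt[where enc=enc, OF lt, of "entries n k X"] entX m by simp
  define Q where "Q P xs \<longleftrightarrow> (m < length (LPc n k P) \<or> (length (LPc n k P) = m \<and> fless (FPc n k P) FX)
      \<or> (FPc n k P = FX \<and> entval enc q xs < e))" for P and xs :: "'a list"
  have gl: "gless enc q n k (rowspace k M) X \<longleftrightarrow> Q (pivM M) (map (\<lambda>(i,j). M i j) (LPc n k (pivM M)))"
    if M: "M \<in> RRset n k" for M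
  proof -
    have RE: "RE n k (rowspace k M) = M" by (rule RE_rowspace[OF M])
    have pv: "piv n k (rowspace k M) = pivM M" unfolding piv_pivM RE ..
    have F: "ferrers n k (rowspace k M) = FPc n k (pivM M)" unfolding ferrers_FPc pv ..
    have fs: "fsize n k (FPc n k (pivM M)) = length (LPc n k (pivM M))" by (rule fsize_FPc[OF RRset_piv(1)[OF M]])
    have en: "entries n k (rowspace k M) = map (\<lambda>(i,j). M i j) (LPc n k (pivM M))"
      unfolding entries_LPc pv RE ..
    show ?thesis unfolding gless_def Let_def F fs en Q_def FX_def[symmetric] m_def[symmetric] e_def[symmetric]
      by auto
  qed
  have step1: "card {Y \<in> Grass n k. gless enc q n k Y X}
      = card {M :: nat \<Rightarrow> nat \<Rightarrow> 'a. M \<in> RRset n k \<and> Q (pivM M) (map (\<lambda>(i,j). M i j) (LPc n k (pivM M)))}"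
  proof -
    let ?R = "{M :: nat \<Rightarrow> nat \<Rightarrow> 'a. M \<in> RRset n k \<and> Q (pivM M) (map (\<lambda>(i,j). M i j) (LPc n k (pivM M)))}"
    have bj: "bij_betw (rowspace k) (RRset n k :: (nat \<Rightarrow> nat \<Rightarrow> 'a) set) (Grass n k)" by (rule Grass_RR)
    have "{Y \<in> Grass n k. gless enc q n k Y X} = rowspace k ` ?R"
    proof
      show "{Y \<in> Grass n k. gless enc q n k Y X} \<subseteq> rowspace k ` ?R"
      proof
        fix Y assume Y: "Y \<in> {Y \<in> Grass n k. gless enc q n k Y X}"
        then obtain M where M: "M \<in> RRset n k" "Y = rowspace k M" using bj unfolding bij_betw_def by auto
        then show "Y \<in> rowspace k ` ?R" using Y gl[OF M(1)] by auto
      qed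
      show "rowspace k ` ?R \<subseteq> {Y \<in> Grass n k. gless enc q n k Y X}"
        using gl bj unfolding bij_betw_def by auto
    qed
    moreover have "inj_on (rowspace k) ?R"
      by (rule inj_on_subset[OF _ , of _ "RRset n k"]) (use bj in \<open>auto simp: bij_betw_def\<close>)
    ultimately show ?thesis by (simp add: card_image)
  qed
  have step2: "card {M :: nat \<Rightarrow> nat \<Rightarrow> 'a. M \<in> RRset n k \<and> Q (pivM M) (map (\<lambda>(i,j). M i j) (LPc n k (pivM M)))}
      = (\<Sum>P\<in>VP n k. card {xs :: 'a list. length xs = length (LPc n k P) \<and> Q P xs})"
    by (rule count_by_piv)
  define g1 where "g1 P = (if m < length (LPc n k P) then q ^ length (LPc n k P) else 0)" for P
  define g2 where "g2 P = (if length (LPc n k P) = m \<and> fless (FPc n k P) FX then q ^ m else 0)" for P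
  define g3 where "g3 P = (if P = PX then e else 0)" for P
  have cardL: "\<And>L. card {xs :: 'a list. length xs = L} = q ^ L"
    using card_lists_length_eq[of "UNIV :: 'a set"] unfolding q_def by simp
  have step3: "card {xs :: 'a list. length xs = length (LPc n k P) \<and> Q P xs} = g1 P + g2 P + g3 P"
    if P: "P \<in> VP n k" for P
  proof -
    let ?L = "length (LPc n k P)"
    consider (A) "m < ?L" | (B) "?L = m \<and> fless (FPc n k P) FX"
      | (C) "\<not> m < ?L" "\<not> (?L = m \<and> fless (FPc n k P) FX)" by blast
    then show ?thesis
    proof cases
      case A
      then have "P \<noteq> PX" using m by auto
      moreover have "{xs :: 'a list. length xs = ?L \<and> Q P xs} = {xs. length xs = ?L}" using A unfolding Q_def by auto
      ultimately show ?thesis using A cardL unfolding g1_def g2_def g3_def by simp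
    next
      case B
      then have "P \<noteq> PX" using FX fless_irrefl by metis
      moreover have "{xs :: 'a list. length xs = ?L \<and> Q P xs} = {xs. length xs = ?L}" using B unfolding Q_def by auto
      ultimately show ?thesis using B cardL unfolding g1_def g2_def g3_def by simp
    next
      case C
      have Qe: "{xs :: 'a list. length xs = ?L \<and> Q P xs} = {xs. length xs = ?L \<and> FPc n k P = FX \<and> entval enc q xs < e}"
        using C unfolding Q_def by auto
      show ?thesis
      proof (cases "P = PX")
        case True
        have "card {xs :: 'a list. length xs = m \<and> entval enc q xs < e} = e"
          unfolding q_def by (rule entval_count[OF bij]) (use e_lt q_def in simp)
        then show ?thesis using Qe True C FX m unfolding g1_def g2_def g3_def by simp
      next
        case False
        then have "FPc n k P \<noteq> FX" using FPc_inj[OF P PX] FX by auto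
        then have E: "{xs :: 'a list. length xs = ?L \<and> Q P xs} = {}" using Qe by auto
        have "g1 P = 0" "g2 P = 0" "g3 P = 0" using C False unfolding g1_def g2_def g3_def by auto
        moreover have "card {xs :: 'a list. length xs = ?L \<and> Q P xs} = 0" unfolding E by simp
        ultimately show ?thesis by simp
      qed
    qed
  qed
  have fin: "finite (VP n k)" by (rule finite_VP)
  have s3: "(\<Sum>P\<in>VP n k. g3 P) = e" unfolding g3_def using fin PX by (simp add: sum.delta')
  have s2: "(\<Sum>P\<in>VP n k. g2 P) = ind n k m FX * q ^ m"
  proof -
    have "(\<Sum>P\<in>VP n k. g2 P) = card {P \<in> VP n k. length (LPc n k P) = m \<and> fless (FPc n k P) FX} * q ^ m"
      unfolding g2_def by (rule sum_if_const[OF fin])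
    moreover have "card {P \<in> VP n k. length (LPc n k P) = m \<and> fless (FPc n k P) FX} = ind n k m FX"
    proof -
      let ?D = "{P \<in> VP n k. length (LPc n k P) = m}"
      have bj: "bij_betw (FPc n k) ?D (box_diagrams n k m)" by (rule FPc_bij[OF kn])
      have "{G \<in> box_diagrams n k m. fless G FX} = FPc n k ` {P \<in> ?D. fless (FPc n k P) FX}"
        using bj unfolding bij_betw_def by auto
      moreover have "inj_on (FPc n k) {P \<in> ?D. fless (FPc n k P) FX}"
        by (rule inj_on_subset[of _ ?D]) (use bj in \<open>auto simp: bij_betw_def\<close>)
      ultimately have "ind n k m FX = card {P \<in> ?D. fless (FPc n k P) FX}"
        unfolding ind_def by (simp add: card_image)
      moreover have "{P \<in> ?D. fless (FPc n k P) FX} = {P \<in> VP n k. length (LPc n k P) = m \<and> fless (FPc n k P) FX}"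
        by auto
      ultimately show ?thesis by simp
    qed
    ultimately show ?thesis by simp
  qed
  have s1: "(\<Sum>P\<in>VP n k. g1 P) = (\<Sum>i\<in>{m+1..k*(n-k)}. p_box k (n-k) i * q ^ i)"
  proof -
    have "(\<Sum>P\<in>VP n k. g1 P) = (\<Sum>y\<in>{..k*(n-k)}. \<Sum>P\<in>{P \<in> VP n k. length (LPc n k P) = y}. g1 P)"
      by (rule sum.group[symmetric]) (use fin LPc_bound in auto)
    also have "\<dots> = (\<Sum>y\<in>{..k*(n-k)}. if m < y then p_box k (n-k) y * q ^ y else 0)"
    proof (rule sum.cong)
      fix y
      have "(\<Sum>P\<in>{P \<in> VP n k. length (LPc n k P) = y}. g1 P)
          = (\<Sum>P\<in>{P \<in> VP n k. length (LPc n k P) = y}. if m < y then q ^ y else 0)"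
        by (rule sum.cong) (auto simp: g1_def)
      also have "\<dots> = card {P \<in> VP n k. length (LPc n k P) = y} * (if m < y then q ^ y else 0)"
        by simp
      also have "card {P \<in> VP n k. length (LPc n k P) = y} = p_box k (n-k) y"
        unfolding p_box_PBs by (rule bij_betw_same_card[OF lam_bij[OF kn]])
      finally show "(\<Sum>P\<in>{P \<in> VP n k. length (LPc n k P) = y}. g1 P) = (if m < y then p_box k (n-k) y * q ^ y else 0)"
        by simp
    qed simp
    also have "\<dots> = (\<Sum>y\<in>{y \<in> {..k*(n-k)}. m < y}. p_box k (n-k) y * q ^ y)"
      by (rule sum.inter_filter[symmetric]) simp
    also have "{y \<in> {..k*(n-k)}. m < y} = {m+1..k*(n-k)}" by auto
    finally show ?thesis .
  qed
  have "card {Y \<in> Grass n k. gless enc q n k Y X} = (\<Sum>P\<in>VP n k. g1 P + g2 P + g3 P)"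
    using step1 step2 step3 by (simp cong: sum.cong)
  also have "\<dots> = (\<Sum>P\<in>VP n k. g1 P) + (\<Sum>P\<in>VP n k. g2 P) + (\<Sum>P\<in>VP n k. g3 P)"
    by (simp add: sum.distrib)
  also have "\<dots> = (\<Sum>i\<in>{m+1..k*(n-k)}. p_box k (n-k) i * q ^ i) + ind n k m FX * q ^ m + e"
    using s1 s2 s3 by simp
  finally show ?thesis unfolding Let_def q_def[symmetric] FX_def[symmetric] m_def[symmetric] e_def[symmetric] .
qed


end
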